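(* (1) The canonical projection $\pi\colon\mathrm{Aut}(\mathbb U)\to\mathrm{Aut}(\mathbb Q_{\ge0})$, $f\mapsto D_f$, is a continuous open surjective homomorphism with kernel $\mathrm{Iso}(\mathbb U)$ that admits a continuous homomorphism $s\colon\mathrm{Aut}(\mathbb Q_{\ge0})\to\mathrm{Aut}(\mathbb U)$ with $\pi\circ s=\mathrm{id}$, and hence induces an isomorphism of topological groups $\mathrm{Aut}(\mathbb U)\cong\mathrm{Iso}(\mathbb U)\rtimes\mathrm{Aut}(\mathbb Q_{\ge0})$, $(n,h)\mapsto n\,s(h)$. (2) Likewise the canonical projection $\bar\pi\colon\mathrm{Aut}_M(\overline{\mathbb U})\to\mathrm{Aut}(\mathbb Q_{\ge0})$ induces an isomorphism of topological groups $\mathrm{Aut}_M(\overline{\mathbb U})\cong\mathrm{Iso}_M(\overline{\mathbb U})\rtimes\mathrm{Aut}(\mathbb Q_{\ge0})$. In particular, the short exact sequences $1\to\mathrm{Iso}(\mathbb U)\to\mathrm{Aut}(\mathbb U)\to\mathrm{Aut}(\mathbb Q_{\ge0})\to1$ and $1\to\mathrm{Iso}_M(\overline{\mathbb U})\to\mathrm{Aut}_M(\overline{\mathbb U})\to\mathrm{Aut}(\mathbb Q_{\ge0})\to1$ split.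
   Context: $\mathbb U$ is the countable rational Urysohn ultrametric space viewed as a two-sorted ultrametric space with distance set $\mathbb Q_{\ge0}$, and $\overline{\mathbb U}$ is its Cauchy completion. A dc-automorphism is a bijection $f$ of points with an order automorphism $D_f$ of $\mathbb Q_{\ge0}$ such that $d(f(x),f(y))=D_f(d(x,y))$; isometries are those with $D_f=\mathrm{id}$. $\mathrm{Aut}(\mathbb U)$ is the group of dc-automorphisms with the topology of pointwise convergence on both sorts (basic neighbourhoods: agreement with $f$ on finitely many points and distances), $\mathrm{Iso}(\mathbb U)$ its subgroup of isometries. $\mathrm{Aut}_M(\overline{\mathbb U})$ is the dc-automorphism group of $\overline{\mathbb U}$ with basic neighbourhoods $\{g:d(g(x),f(x))<r\ \forall x\in A\}$, $A$ finite, $r>0$, and $\mathrm{Iso}_M(\overline{\mathbb U})$ its subgroup of isometries; $\mathrm{Aut}(\mathbb Q_{\ge0})$ has pointwise convergence topology. The semidirect product $N\rtimes H$ is $N\times H$ with the product topology and multiplication $(n,h)(n',h')=(n\,s(h)n's(h)^{-1},hh')$. *)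

theory Defs
  imports "HOL-Analysis.Analysis"
begin

definition Qnn :: "rat set" where
  "Qnn = {q. 0 \<le> q}"

text \<open>Convention: they are
  extended by the identity on negative rationals, so that each automorphism
  has a unique representative as a total function on rat.\<close>
definition autQ :: "(rat \<Rightarrow> rat) set" where
  "autQ = {D. bij_betw D Qnn Qnn
             \<and> (\<forall>p\<in>Qnn. \<forall>q\<in>Qnn. p \<le> q \<longleftrightarrow> D p \<le> D q)
             \<and> (\<forall>q. q < 0 \<longrightarrow> D q = q)}"

definition autQ_topology :: "(rat \<Rightarrow> rat) topology" where
  "autQ_topology = topology_generated_by
     {{D \<in> autQ. \<forall>q\<in>B. D q = D0 q} | D0 B. D0 \<in> autQ \<and> finite B \<and> B \<subseteq> Qnn}"

definition ultrametric :: "('a \<Rightarrow> 'a \<Rightarrow> rat) \<Rightarrow> bool" where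
  "ultrametric d \<longleftrightarrow>
     (\<forall>x y. 0 \<le> d x y) \<and> (\<forall>x y. d x y = 0 \<longleftrightarrow> x = y) \<and> (\<forall>x y. d x y = d y x)
     \<and> (\<forall>x y z. d x z \<le> max (d x y) (d y z))"

text \<open>The countable rational Urysohn ultrametric space (on the whole type):
  a countable ultrametric space with rational distances having the one-point
  extension property for all finite ultrametric spaces with rational distances
  (this characterizes it up to isometry, as the Fraisse limit).\<close>
definition rational_urysohn_ultrametric :: "('a \<Rightarrow> 'a \<Rightarrow> rat) \<Rightarrow> bool" where
  "rational_urysohn_ultrametric d \<longleftrightarrow>
     countable (UNIV :: 'a set) \<and> ultrametric d \<and>
     (\<forall>A r. finite A \<and> (\<forall>a\<in>A. 0 < r a)
        \<and> (\<forall>a\<in>A. \<forall>b\<in>A. d a b \<le> max (r a) (r b) \<and> r a \<le> max (d a b) (r b))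
        \<longrightarrow> (\<exists>z. \<forall>a\<in>A. d z a = r a))"

definition cauchy_seq_rat :: "('b \<Rightarrow> 'b \<Rightarrow> rat) \<Rightarrow> (nat \<Rightarrow> 'b) \<Rightarrow> bool" where
  "cauchy_seq_rat e x \<longleftrightarrow> (\<forall>\<epsilon>>0. \<exists>N. \<forall>m\<ge>N. \<forall>n\<ge>N. e (x m) (x n) < \<epsilon>)"

definition converges_rat :: "('b \<Rightarrow> 'b \<Rightarrow> rat) \<Rightarrow> (nat \<Rightarrow> 'b) \<Rightarrow> 'b \<Rightarrow> bool" where
  "converges_rat e x y \<longleftrightarrow> (\<forall>\<epsilon>>0. \<exists>N. \<forall>n\<ge>N. e (x n) y < \<epsilon>)"

text \<open>(e, j) is a Cauchy completion of d: e is a complete ultrametric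
  (its distances lie in Q>=0, as they do for the completion of an ultrametric
  space with distances in Q>=0), j is an isometric embedding with dense image.\<close>
definition is_completion ::
  "('a \<Rightarrow> 'a \<Rightarrow> rat) \<Rightarrow> ('b \<Rightarrow> 'b \<Rightarrow> rat) \<Rightarrow> ('a \<Rightarrow> 'b) \<Rightarrow> bool" where
  "is_completion d e j \<longleftrightarrow>
     ultrametric e
     \<and> (\<forall>x. cauchy_seq_rat e x \<longrightarrow> (\<exists>y. converges_rat e x y))
     \<and> (\<forall>x y. e (j x) (j y) = d x y)
     \<and> (\<forall>y. \<forall>\<epsilon>>0. \<exists>x. e (j x) y < \<epsilon>)"

definition dc_aut :: "('a \<Rightarrow> 'a \<Rightarrow> rat) \<Rightarrow> (('a \<Rightarrow> 'a) \<times> (rat \<Rightarrow> rat)) set" where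
  "dc_aut d = {(f, D). bij f \<and> D \<in> autQ \<and> (\<forall>x y. d (f x) (f y) = D (d x y))}"

definition dc_iso :: "('a \<Rightarrow> 'a \<Rightarrow> rat) \<Rightarrow> (('a \<Rightarrow> 'a) \<times> (rat \<Rightarrow> rat)) set" where
  "dc_iso d = {p \<in> dc_aut d. snd p = id}"

definition dc_mult ::
  "('a \<Rightarrow> 'a) \<times> (rat \<Rightarrow> rat) \<Rightarrow> ('a \<Rightarrow> 'a) \<times> (rat \<Rightarrow> rat) \<Rightarrow> ('a \<Rightarrow> 'a) \<times> (rat \<Rightarrow> rat)" where
  "dc_mult p q = (fst p \<circ> fst q, snd p \<circ> snd q)"

definition dc_inv :: "('a \<Rightarrow> 'a) \<times> (rat \<Rightarrow> rat) \<Rightarrow> ('a \<Rightarrow> 'a) \<times> (rat \<Rightarrow> rat)" where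
  "dc_inv p = (inv (fst p), \<lambda>q. if 0 \<le> q then inv_into Qnn (snd p) q else q)"

definition aut_topology :: "('a \<Rightarrow> 'a \<Rightarrow> rat) \<Rightarrow> (('a \<Rightarrow> 'a) \<times> (rat \<Rightarrow> rat)) topology" where
  "aut_topology d = topology_generated_by
     {{p \<in> dc_aut d. (\<forall>x\<in>A. fst p x = fst p0 x) \<and> (\<forall>q\<in>B. snd p q = snd p0 q)}
       | p0 A B. p0 \<in> dc_aut d \<and> finite A \<and> finite B \<and> B \<subseteq> Qnn}"

definition autM_topology :: "('b \<Rightarrow> 'b \<Rightarrow> rat) \<Rightarrow> (('b \<Rightarrow> 'b) \<times> (rat \<Rightarrow> rat)) topology" where
  "autM_topology e = topology_generated_by
     {{p \<in> dc_aut e. \<forall>x\<in>A. e (fst p x) (fst p0 x) < r}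
       | p0 A r. p0 \<in> dc_aut e \<and> finite A \<and> 0 < r}"

text \<open>Multiplication of N \<rtimes> H given the section s:
  (n,h)(n',h') = (n s(h) n' s(h)^-1, h h').\<close>
definition sd_mult ::
  "((rat \<Rightarrow> rat) \<Rightarrow> ('a \<Rightarrow> 'a) \<times> (rat \<Rightarrow> rat))
   \<Rightarrow> (('a \<Rightarrow> 'a) \<times> (rat \<Rightarrow> rat)) \<times> (rat \<Rightarrow> rat)
   \<Rightarrow> (('a \<Rightarrow> 'a) \<times> (rat \<Rightarrow> rat)) \<times> (rat \<Rightarrow> rat)
   \<Rightarrow> (('a \<Rightarrow> 'a) \<times> (rat \<Rightarrow> rat)) \<times> (rat \<Rightarrow> rat)" where
  "sd_mult s x y =
     (dc_mult (dc_mult (fst x) (s (snd x))) (dc_mult (fst y) (dc_inv (s (snd x)))),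
      snd x \<circ> snd y)"

definition projection_splits ::
  "('a \<Rightarrow> 'a \<Rightarrow> rat) \<Rightarrow> (('a \<Rightarrow> 'a) \<times> (rat \<Rightarrow> rat)) topology \<Rightarrow> bool" where
  "projection_splits d T \<longleftrightarrow>
     continuous_map T autQ_topology snd
     \<and> open_map T autQ_topology snd
     \<and> snd ` dc_aut d = autQ
     \<and> (\<forall>p\<in>dc_aut d. \<forall>q\<in>dc_aut d. snd (dc_mult p q) = snd p \<circ> snd q)
     \<and> {p \<in> dc_aut d. snd p = id} = dc_iso d
     \<and> (\<exists>s. s \<in> autQ \<rightarrow> dc_aut d
          \<and> continuous_map autQ_topology T s
          \<and> (\<forall>h\<in>autQ. \<forall>h'\<in>autQ. s (h \<circ> h') = dc_mult (s h) (s h'))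
          \<and> (\<forall>h\<in>autQ. snd (s h) = h)
          \<and> homeomorphic_map (prod_topology (subtopology T (dc_iso d)) autQ_topology) T
              (\<lambda>x. dc_mult (fst x) (s (snd x)))
          \<and> (\<forall>x\<in>dc_iso d \<times> autQ. \<forall>y\<in>dc_iso d \<times> autQ.
               dc_mult (fst (sd_mult s x y)) (s (snd (sd_mult s x y)))
                 = dc_mult (dc_mult (fst x) (s (snd x))) (dc_mult (fst y) (s (snd y)))))"

end

theory Submission
  imports Defs
begin


lemma autQ_D: assumes "D \<in> autQ"
  shows "bij_betw D Qnn Qnn" "\<And>p q. p \<in> Qnn \<Longrightarrow> q \<in> Qnn \<Longrightarrow> p \<le> q \<longleftrightarrow> D p \<le> D q"
    "\<And>q. q < 0 \<Longrightarrow> D q = q"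
  using assms unfolding autQ_def by auto

lemma autQ_nonneg: assumes "D \<in> autQ" "0 \<le> q" shows "0 \<le> D q"
proof -
  have "q \<in> Qnn" using assms(2) by (simp add: Qnn_def)
  then have "D q \<in> D ` Qnn" by blast
  also have "D ` Qnn = Qnn" using autQ_D(1)[OF assms(1)] by (simp add: bij_betw_def)
  finally show ?thesis by (simp add: Qnn_def)
qed

lemma autQ_le_iff: assumes "D \<in> autQ" shows "D p \<le> D q \<longleftrightarrow> p \<le> q"
proof (cases "0 \<le> p")
  case True
  then show ?thesis
  proof (cases "0 \<le> q")
    case True
    then show ?thesis using autQ_D(2)[OF assms, of p q] \<open>0 \<le> p\<close> by (auto simp: Qnn_def)
  next
    case False
    then have "D q = q" using autQ_D(3)[OF assms] by auto
    moreover have "0 \<le> D p" using autQ_nonneg[OF assms True] .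
    ultimately show ?thesis using False True by auto
  qed
next
  case False
  then have Dp: "D p = p" using autQ_D(3)[OF assms] by auto
  show ?thesis
  proof (cases "0 \<le> q")
    case True
    then show ?thesis using Dp False autQ_nonneg[OF assms True] by auto
  next
    case False
    then show ?thesis using Dp autQ_D(3)[OF assms] by auto
  qed
qed

lemma autQ_less_iff: "D \<in> autQ \<Longrightarrow> D p < D q \<longleftrightarrow> p < q"
  using autQ_le_iff[of D q p] by (meson not_le)

lemma autQ_inj: assumes "D \<in> autQ" shows "inj D"
proof (rule injI)
  fix x y assume "D x = D y"
  then show "x = y" using autQ_le_iff[OF assms, of x y] autQ_le_iff[OF assms, of y x] by auto
qed

lemma autQ_eq_iff: assumes "D \<in> autQ" shows "D p = D q \<longleftrightarrow> p = q"
  by (rule inj_eq[OF autQ_inj[OF assms]])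

lemma autQ_zero: assumes "D \<in> autQ" shows "D 0 = 0"
proof -
  have "0 \<in> Qnn" by (simp add: Qnn_def)
  then obtain p where p: "p \<in> Qnn" "D p = 0"
    using autQ_D(1)[OF assms] unfolding bij_betw_def by (metis imageE)
  have "D 0 \<le> D p" using p(1) autQ_le_iff[OF assms, of 0 p] by (simp add: Qnn_def)
  then have "D 0 \<le> 0" using p by simp
  then show ?thesis using autQ_nonneg[OF assms, of 0] by simp
qed

lemma autQ_surj: assumes "D \<in> autQ" shows "surj D"
proof -
  have "q \<in> range D" for q
  proof (cases "0 \<le> q")
    case True
    then have "q \<in> Qnn" by (simp add: Qnn_def)
    then show ?thesis using autQ_D(1)[OF assms] unfolding bij_betw_def by auto
  next
    case False
    then have "q = D q" using autQ_D(3)[OF assms, of q] by simp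
    then show ?thesis by (rule range_eqI)
  qed
  then show ?thesis by auto
qed

lemma autQ_bij: "D \<in> autQ \<Longrightarrow> bij D"
  by (simp add: bij_def autQ_inj autQ_surj)

lemma autQ_pos_iff: "D \<in> autQ \<Longrightarrow> 0 < D q \<longleftrightarrow> 0 < q"
  using autQ_less_iff[of D 0 q] autQ_zero[of D] by simp

lemma autQ_nonneg_iff: "D \<in> autQ \<Longrightarrow> 0 \<le> D q \<longleftrightarrow> 0 \<le> q"
  using autQ_le_iff[of D 0 q] autQ_zero[of D] by simp

lemma autQ_I:
  assumes "bij D" "\<And>p q. D p \<le> D q \<longleftrightarrow> p \<le> q" "\<And>q. q < 0 \<Longrightarrow> D q = q"
  shows "D \<in> autQ"
proof -
  have nn: "0 \<le> D q \<longleftrightarrow> 0 \<le> q" for q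
  proof
    assume "0 \<le> D q"
    show "0 \<le> q"
    proof (rule ccontr)
      assume "\<not> 0 \<le> q" then have "D q = q" using assms(3) by auto
      then show False using \<open>0 \<le> D q\<close> \<open>\<not> 0 \<le> q\<close> by auto
    qed
  next
    assume "0 \<le> q"
    show "0 \<le> D q"
    proof (rule ccontr)
      assume "\<not> 0 \<le> D q"
      obtain p where p: "D p = D q" "p = D q" using assms(3)[of "D q"] \<open>\<not> 0 \<le> D q\<close> by auto
      then have "p = q" using assms(2)[of p q] assms(2)[of q p] by auto
      then show False using p \<open>0 \<le> q\<close> \<open>\<not> 0 \<le> D q\<close> by auto
    qed
  qed
  have "D ` Qnn = Qnn"
  proof
    show "D ` Qnn \<subseteq> Qnn" using nn by (auto simp: Qnn_def)
    show "Qnn \<subseteq> D ` Qnn"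
    proof
      fix q assume "q \<in> Qnn"
      obtain p where "D p = q" using assms(1) by (metis bij_pointE)
      then show "q \<in> D ` Qnn" using nn \<open>q \<in> Qnn\<close> by (auto simp: Qnn_def)
    qed
  qed
  moreover have "inj_on D Qnn" using assms(1) bij_is_inj inj_on_subset by blast
  ultimately have "bij_betw D Qnn Qnn" by (simp add: bij_betw_def)
  then show ?thesis using assms unfolding autQ_def by auto
qed

lemma autQ_inv: assumes "D \<in> autQ" shows "inv D \<in> autQ"
proof (rule autQ_I)
  show "bij (inv D)" using autQ_bij[OF assms] bij_imp_bij_inv by blast
  have fi: "D (inv D x) = x" for x using autQ_surj[OF assms] by (simp add: surj_f_inv_f)
  show "inv D p \<le> inv D q \<longleftrightarrow> p \<le> q" for p q
    using autQ_le_iff[OF assms, of "inv D p" "inv D q"] fi by simp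
  show "q < 0 \<Longrightarrow> inv D q = q" for q
    using autQ_D(3)[OF assms, of q] autQ_inj[OF assms] by (metis inv_f_f)
qed

lemma autQ_f_inv: "D \<in> autQ \<Longrightarrow> D (inv D x) = x"
  using autQ_surj by (simp add: surj_f_inv_f)

lemma autQ_inv_f: "D \<in> autQ \<Longrightarrow> inv D (D x) = x"
  using autQ_inj by (simp add: inv_f_f)

lemma autQ_comp: assumes "D \<in> autQ" "D' \<in> autQ" shows "D \<circ> D' \<in> autQ"
proof (rule autQ_I)
  show "bij (D \<circ> D')" using autQ_bij assms bij_comp by blast
  show "(D \<circ> D') p \<le> (D \<circ> D') q \<longleftrightarrow> p \<le> q" for p q using autQ_le_iff assms by simp
  show "q < 0 \<Longrightarrow> (D \<circ> D') q = q" for q using autQ_D(3)[OF assms(2), of q] autQ_D(3)[OF assms(1), of q] by simp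
qed

lemma autQ_id: "id \<in> autQ"
  by (rule autQ_I) auto

lemma autQ_comp_inv: "D \<in> autQ \<Longrightarrow> D \<circ> inv D = id"
  using autQ_f_inv by fastforce

lemma autQ_inv_comp: "D \<in> autQ \<Longrightarrow> inv D \<circ> D = id"
  using autQ_inv_f by fastforce

lemma autQ_small: assumes "D \<in> autQ" "t < inv D r" shows "D t < r"
  using autQ_less_iff[OF assms(1), of t "inv D r"] assms autQ_f_inv[OF assms(1), of r] by simp

lemma autQ_inv_pos: "D \<in> autQ \<Longrightarrow> 0 < r \<Longrightarrow> 0 < inv D r"
  using autQ_pos_iff autQ_inv by blast

lemma autQ_max: "D \<in> autQ \<Longrightarrow> D (max a b) = max (D a) (D b)"
  using autQ_le_iff by (simp add: max_def)

definition ultra_on :: "'c set \<Rightarrow> ('c \<Rightarrow> 'c \<Rightarrow> rat) \<Rightarrow> bool" where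
  "ultra_on X d \<longleftrightarrow> (\<forall>x\<in>X. \<forall>y\<in>X. 0 \<le> d x y \<and> (d x y = 0 \<longleftrightarrow> x = y) \<and> d x y = d y x
      \<and> (\<forall>z\<in>X. d x z \<le> max (d x y) (d y z)))"

definition ury_on :: "'c set \<Rightarrow> ('c \<Rightarrow> 'c \<Rightarrow> rat) \<Rightarrow> bool" where
  "ury_on X d \<longleftrightarrow> (\<forall>A r. finite A \<and> A \<subseteq> X \<and> (\<forall>a\<in>A. 0 < r a)
        \<and> (\<forall>a\<in>A. \<forall>b\<in>A. d a b \<le> max (r a) (r b) \<and> r a \<le> max (d a b) (r b))
        \<longrightarrow> (\<exists>z\<in>X. \<forall>a\<in>A. d z a = r a))"

lemma ultrametricD:
  assumes "ultrametric d"
  shows "0 \<le> d x y" "d x y = 0 \<longleftrightarrow> x = y" "d x y = d y x" "d x z \<le> max (d x y) (d y z)"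
    "d x x = 0"
proof -
  note H = assms[unfolded ultrametric_def]
  show "0 \<le> d x y" using conjunct1[OF H] by (rule spec2)
  show "d x y = 0 \<longleftrightarrow> x = y" using conjunct1[OF conjunct2[OF H]] by (rule spec2)
  show "d x y = d y x" using conjunct1[OF conjunct2[OF conjunct2[OF H]]] by (rule spec2)
  show "d x z \<le> max (d x y) (d y z)" using conjunct2[OF conjunct2[OF conjunct2[OF H]]]
    by (elim allE)
  show "d x x = 0" using conjunct1[OF conjunct2[OF H]] by (elim allE) (erule iffD2, rule refl)
qed

lemma ultrametric_on: assumes "ultrametric d" shows "ultra_on UNIV d"
  unfolding ultra_on_def
  by (intro ballI conjI; (rule ultrametricD[OF assms])?)

lemma ultra_iso:
  assumes "ultrametric d" "d a b < d b c" shows "d a c = d b c"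
proof -
  have 1: "d a c \<le> max (d a b) (d b c)" using ultrametricD(4)[OF assms(1)] .
  have 2: "d b c \<le> max (d b a) (d a c)" using ultrametricD(4)[OF assms(1)] .
  have 3: "d b a = d a b" using ultrametricD(3)[OF assms(1)] .
  have "max (d a b) (d b c) = d b c" using assms(2) by simp
  then have 4: "d a c \<le> d b c" using 1 by simp
  have "d b c \<le> d a c"
  proof (rule ccontr)
    assume "\<not> d b c \<le> d a c"
    then have "max (d b a) (d a c) < d b c" using 3 assms(2) by simp
    then show False using 2 by linarith
  qed
  then show ?thesis using 4 by simp
qed

lemma ultra_lt:
  assumes "ultrametric d" "d x y < r" "d y z < r" shows "d x z < r"
proof -
  have "d x z \<le> max (d x y) (d y z)" using ultrametricD(4)[OF assms(1)] .
  moreover have "max (d x y) (d y z) < r" using assms(2,3) by simp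
  ultimately show ?thesis by linarith
qed

lemma ultra_lt3:
  assumes "ultrametric d" "d x y < r" "d y z < r" "d z w < r" shows "d x w < r"
  using ultra_lt[OF assms(1) ultra_lt[OF assms(1,2,3)] assms(4)] .

lemma ultra_stable:
  assumes "ultrametric d" "d a a' < t" "d b b' < t" "t \<le> d a b" shows "d a' b' = d a b"
proof -
  have s1: "d a' a = d a a'" using ultrametricD(3)[OF assms(1)] .
  have 1: "d a' b = d a b"
    using ultra_iso[OF assms(1), of a' a b] assms s1 by simp
  have s2: "d b' b = d b b'" using ultrametricD(3)[OF assms(1)] .
  have s3: "d b a' = d a' b" using ultrametricD(3)[OF assms(1)] .
  have s4: "d b' a' = d a' b'" using ultrametricD(3)[OF assms(1)] .
  have "d b' b < d b a'" using 1 assms s2 s3 by simp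
  then have "d b' a' = d b a'" using ultra_iso[OF assms(1), of b' b a'] by simp
  then show ?thesis using 1 s3 s4 by simp
qed

lemma rat_zero_if_small:
  fixes t :: rat assumes "0 \<le> t" "\<And>\<epsilon>. 0 < \<epsilon> \<Longrightarrow> t < \<epsilon>" shows "t = 0"
proof (rule ccontr)
  assume "t \<noteq> 0" then have "0 < t" using assms(1) by simp
  then have "t < t" using assms(2) by blast
  then show False by simp
qed




section \<open>Back and forth\<close>

lemma ultra_onD:
  assumes "ultra_on X d" "x \<in> X" "y \<in> X"
  shows "0 \<le> d x y" "d x y = 0 \<longleftrightarrow> x = y" "d x y = d y x" "d x x = 0"
    "z \<in> X \<Longrightarrow> d x z \<le> max (d x y) (d y z)"
  using assms unfolding ultra_on_def by auto

definition piso :: "'c set \<Rightarrow> 'e set \<Rightarrow> ('c \<Rightarrow> 'c \<Rightarrow> rat) \<Rightarrow> ('e \<Rightarrow> 'e \<Rightarrow> rat) \<Rightarrow> ('c \<times> 'e) set \<Rightarrow> bool"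
  where "piso X Y d1 d2 R \<longleftrightarrow> finite R \<and> R \<subseteq> X \<times> Y \<and>
           (\<forall>a b a' b'. (a, b) \<in> R \<longrightarrow> (a', b') \<in> R \<longrightarrow> d2 b b' = d1 a a')"

lemma pisoD: assumes "piso X Y d1 d2 R" "(a, b) \<in> R" "(a', b') \<in> R"
  shows "d2 b b' = d1 a a'"
  using assms unfolding piso_def by blast

lemma piso_conv: assumes "piso X Y d1 d2 R" shows "piso Y X d2 d1 (R\<inverse>)"
proof -
  have "finite (R\<inverse>)" using assms unfolding piso_def by simp
  moreover have "R\<inverse> \<subseteq> Y \<times> X" using assms unfolding piso_def by auto
  moreover have "d1 b b' = d2 a a'" if "(a, b) \<in> R\<inverse>" "(a', b') \<in> R\<inverse>" for a b a' b'
    using pisoD[OF assms, of b a b' a'] that by simp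
  ultimately show ?thesis unfolding piso_def by blast
qed

lemma piso_inj:
  assumes "ultra_on X d1" "piso X Y d1 d2 R" "(a, b) \<in> R" "(a', b) \<in> R" "ultra_on Y d2"
  shows "a = a'"
proof -
  have ab: "a \<in> X" "a' \<in> X" "b \<in> Y" using assms(2-4) unfolding piso_def by auto
  have "d1 a a' = d2 b b" using pisoD[OF assms(2,3,4)] by simp
  also have "\<dots> = 0" using ultra_onD(4)[OF assms(5) ab(3) ab(3)] .
  finally show ?thesis using ultra_onD(2)[OF assms(1) ab(1,2)] by simp
qed

lemma forth:
  assumes u1: "ultra_on X d1" and u2: "ultra_on Y d2" and ur: "ury_on Y d2"
    and P: "piso X Y d1 d2 R" and x: "x \<in> X"
  shows "\<exists>R'. piso X Y d1 d2 R' \<and> R \<subseteq> R' \<and> x \<in> fst ` R'"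
proof (cases "x \<in> fst ` R")
  case True then show ?thesis using P by blast
next
  case False
  define A where "A = snd ` R"
  define r where "r b = d1 x (SOME a. (a, b) \<in> R)" for b
  have RXY: "R \<subseteq> X \<times> Y" using P unfolding piso_def by simp
  have rv: "r b = d1 x a" if "(a, b) \<in> R" for a b
  proof -
    have "(SOME a. (a, b) \<in> R) = a"
    proof -
      have "(SOME a. (a, b) \<in> R, b) \<in> R" using that by (rule someI)
      then show ?thesis using piso_inj[OF u1 P _ that u2] by blast
    qed
    then show ?thesis unfolding r_def by simp
  qed
  have "finite A" using P unfolding piso_def A_def by simp
  moreover have "A \<subseteq> Y" using RXY unfolding A_def by auto
  moreover have "\<forall>b\<in>A. 0 < r b"
  proof
    fix b assume "b \<in> A"
    then obtain a where ab: "(a, b) \<in> R" unfolding A_def by auto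
    then have aX: "a \<in> X" using RXY by auto
    have "a \<in> fst ` R" using ab by (simp add: rev_image_eqI)
    then have "x \<noteq> a" using False by auto
    then have "d1 x a \<noteq> 0" using ultra_onD(2)[OF u1 x aX] by simp
    moreover have "0 \<le> d1 x a" using ultra_onD(1)[OF u1 x aX] .
    ultimately show "0 < r b" using rv[OF ab] by simp
  qed
  moreover have "\<forall>b\<in>A. \<forall>b'\<in>A. d2 b b' \<le> max (r b) (r b') \<and> r b \<le> max (d2 b b') (r b')"
  proof (intro ballI)
    fix b b' assume "b \<in> A" "b' \<in> A"
    then obtain a a' where ab: "(a, b) \<in> R" "(a', b') \<in> R" unfolding A_def by auto
    then have aX: "a \<in> X" "a' \<in> X" using RXY by auto
    have e1: "d2 b b' = d1 a a'" using pisoD[OF P ab] .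
    have e2: "d1 a x = d1 x a" using ultra_onD(3)[OF u1 aX(1) x] .
    have e3: "d1 a a' = d1 a' a" using ultra_onD(3)[OF u1 aX(1) aX(2)] .
    have t1: "d1 a a' \<le> max (d1 a x) (d1 x a')" using ultra_onD(5)[OF u1 aX(1) x aX(2)] .
    have t2: "d1 x a \<le> max (d1 x a') (d1 a' a)" using ultra_onD(5)[OF u1 x aX(2) aX(1)] .
    show "d2 b b' \<le> max (r b) (r b') \<and> r b \<le> max (d2 b b') (r b')"
      using t1 t2 e1 e2 e3 rv[OF ab(1)] rv[OF ab(2)] by (simp add: max.commute)
  qed
  ultimately have "\<exists>z\<in>Y. \<forall>b\<in>A. d2 z b = r b"
    using ur[unfolded ury_on_def, rule_format, of A r] by simp
  then obtain z where z: "z \<in> Y" "\<forall>b\<in>A. d2 z b = r b" by blast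
  define R' where "R' = insert (x, z) R"
  have "finite R'" using P unfolding piso_def R'_def by simp
  moreover have "R' \<subseteq> X \<times> Y" using RXY x z(1) unfolding R'_def by simp
  moreover have "d2 b b' = d1 a a'" if "(a, b) \<in> R'" "(a', b') \<in> R'" for a b a' b'
  proof -
    have zb: "d2 z b = d1 x a" if "(a, b) \<in> R" for a b
    proof -
      have "b \<in> A" unfolding A_def using that by (simp add: rev_image_eqI)
      then show ?thesis using z(2) rv[OF that] by simp
    qed
    have zz: "d2 z z = d1 x x" using ultra_onD(4)[OF u2 z(1) z(1)] ultra_onD(4)[OF u1 x x] by simp
    have sym: "d2 b z = d1 a x" if "(a, b) \<in> R" for a b
    proof -
      have "a \<in> X" "b \<in> Y" using that RXY by auto
      then show ?thesis using zb[OF that] ultra_onD(3)[OF u1 x \<open>a \<in> X\<close>] ultra_onD(3)[OF u2 z(1) \<open>b \<in> Y\<close>]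
        by simp
    qed
    show ?thesis
    proof (cases "(a, b) = (x, z)")
      case True
      then show ?thesis
      proof (cases "(a', b') = (x, z)")
        case True then show ?thesis using \<open>(a, b) = (x, z)\<close> zz by simp
      next
        case False then have "(a', b') \<in> R" using that(2) unfolding R'_def by auto
        then show ?thesis using zb \<open>(a, b) = (x, z)\<close> by simp
      qed
    next
      case False
      then have abR: "(a, b) \<in> R" using that(1) unfolding R'_def by auto
      show ?thesis
      proof (cases "(a', b') = (x, z)")
        case True then show ?thesis using sym[OF abR] by simp
      next
        case False then have "(a', b') \<in> R" using that(2) unfolding R'_def by auto
        then show ?thesis using pisoD[OF P abR] by simp
      qed
    qed
  qed
  ultimately have "piso X Y d1 d2 R'" unfolding piso_def by blast
  moreover have "R \<subseteq> R'" "x \<in> fst ` R'" unfolding R'_def by auto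
  ultimately show ?thesis by blast
qed

lemma back_step:
  assumes u1: "ultra_on X d1" and u2: "ultra_on Y d2" and ur: "ury_on X d1"
    and P: "piso X Y d1 d2 R" and y: "y \<in> Y"
  shows "\<exists>R'. piso X Y d1 d2 R' \<and> R \<subseteq> R' \<and> y \<in> snd ` R'"
proof -
  obtain R'' where R'': "piso Y X d2 d1 R''" "R\<inverse> \<subseteq> R''" "y \<in> fst ` R''"
    using forth[OF u2 u1 ur piso_conv[OF P] y] by blast
  have "piso X Y d1 d2 (R''\<inverse>)" using piso_conv[OF R''(1)] by simp
  moreover have "R \<subseteq> R''\<inverse>" using R''(2) by auto
  moreover have "y \<in> snd ` (R''\<inverse>)" using R''(3) by force
  ultimately show ?thesis by blast
qed

lemma ury_on_nonempty: assumes "ury_on X d" shows "X \<noteq> {}"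
proof -
  have "\<exists>z\<in>X. \<forall>a\<in>{}. d z a = (\<lambda>_. 1) a"
    using assms[unfolded ury_on_def, rule_format, of "{}" "\<lambda>_. 1"] by simp
  then show ?thesis by blast
qed

lemma BF:
  assumes cX: "countable X" and cY: "countable Y"
    and u1: "ultra_on X d1" and u2: "ultra_on Y d2"
    and ur1: "ury_on X d1" and ur2: "ury_on Y d2"
    and F: "finite F" "F \<subseteq> X" "p ` F \<subseteq> Y"
    and iso: "\<forall>a\<in>F. \<forall>b\<in>F. d2 (p a) (p b) = d1 a b"
  shows "\<exists>f. bij_betw f X Y \<and> (\<forall>x\<in>X. \<forall>y\<in>X. d2 (f x) (f y) = d1 x y) \<and> (\<forall>a\<in>F. f a = p a)"
proof -
  define ex where "ex = from_nat_into X"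
  define ey where "ey = from_nat_into Y"
  have exX: "ex n \<in> X" for n unfolding ex_def by (rule from_nat_into[OF ury_on_nonempty[OF ur1]])
  have eyY: "ey n \<in> Y" for n unfolding ey_def by (rule from_nat_into[OF ury_on_nonempty[OF ur2]])
  have rX: "range ex = X" unfolding ex_def by (rule range_from_nat_into[OF ury_on_nonempty[OF ur1] cX])
  have rY: "range ey = Y" unfolding ey_def by (rule range_from_nat_into[OF ury_on_nonempty[OF ur2] cY])
  define R0 where "R0 = (\<lambda>a. (a, p a)) ` F"
  have P0: "piso X Y d1 d2 R0"
  proof -
    have "finite R0" using F(1) unfolding R0_def by simp
    moreover have "R0 \<subseteq> X \<times> Y" using F(2,3) unfolding R0_def by auto
    moreover have "d2 b b' = d1 a a'" if "(a, b) \<in> R0" "(a', b') \<in> R0" for a b a' b'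
      using that iso unfolding R0_def by auto
    ultimately show ?thesis unfolding piso_def by blast
  qed
  define Fw where "Fw R x = (SOME R'. piso X Y d1 d2 R' \<and> R \<subseteq> R' \<and> x \<in> fst ` R')" for R x
  define Gw where "Gw R y = (SOME R'. piso X Y d1 d2 R' \<and> R \<subseteq> R' \<and> y \<in> snd ` R')" for R y
  have Fw: "piso X Y d1 d2 (Fw R x) \<and> R \<subseteq> Fw R x \<and> x \<in> fst ` Fw R x"
    if "piso X Y d1 d2 R" "x \<in> X" for R x
    unfolding Fw_def by (rule someI_ex[OF forth[OF u1 u2 ur2 that]])
  have Gw: "piso X Y d1 d2 (Gw R y) \<and> R \<subseteq> Gw R y \<and> y \<in> snd ` Gw R y"
    if "piso X Y d1 d2 R" "y \<in> Y" for R y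
    unfolding Gw_def by (rule someI_ex[OF back_step[OF u1 u2 ur1 that]])
  define C where "C = rec_nat R0 (\<lambda>n R. Gw (Fw R (ex n)) (ey n))"
  have C0: "C 0 = R0" unfolding C_def by simp
  have CS: "C (Suc n) = Gw (Fw (C n) (ex n)) (ey n)" for n unfolding C_def by simp
  have CP: "piso X Y d1 d2 (C n)" for n
  proof (induction n)
    case 0 then show ?case using P0 C0 by simp
  next
    case (Suc n)
    have "piso X Y d1 d2 (Fw (C n) (ex n))" using Fw[OF Suc exX] by blast
    then show ?case using Gw[OF _ eyY] CS by simp
  qed
  have Cstep: "C n \<subseteq> C (Suc n) \<and> ex n \<in> fst ` C (Suc n) \<and> ey n \<in> snd ` C (Suc n)" for n
  proof -
    have 1: "piso X Y d1 d2 (Fw (C n) (ex n))" "C n \<subseteq> Fw (C n) (ex n)" "ex n \<in> fst ` Fw (C n) (ex n)"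
      using Fw[OF CP exX] by blast+
    have 2: "Fw (C n) (ex n) \<subseteq> C (Suc n)" "ey n \<in> snd ` C (Suc n)"
      using Gw[OF 1(1) eyY] CS by simp_all
    show ?thesis using 1 2 by blast
  qed
  have Cmono: "C m \<subseteq> C n" if "m \<le> n" for m n
  proof -
    have "\<And>k. C k \<subseteq> C (Suc k)" using Cstep by simp
    then show ?thesis using lift_Suc_mono_le[of C, OF _ that] by simp
  qed
  define R where "R = (\<Union>n. C n)"
  have RXY: "R \<subseteq> X \<times> Y"
  proof -
    have "C n \<subseteq> X \<times> Y" for n using CP[of n] unfolding piso_def by simp
    then show ?thesis unfolding R_def by (simp add: UN_least)
  qed
  have Riso: "d2 b b' = d1 a a'" if ab: "(a, b) \<in> R" "(a', b') \<in> R" for a b a' b'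
  proof -
    obtain m n where mn: "(a, b) \<in> C m" "(a', b') \<in> C n" using ab unfolding R_def by blast
    have "(a, b) \<in> C (max m n)" "(a', b') \<in> C (max m n)"
      using mn Cmono[of m "max m n"] Cmono[of n "max m n"] by auto
    then show ?thesis by (rule pisoD[OF CP])
  qed
  have Rfun: "y = y'" if "(x, y) \<in> R" "(x, y') \<in> R" for x y y'
  proof -
    have xy: "x \<in> X" "y \<in> Y" "y' \<in> Y" using that RXY by auto
    have "d2 y y' = d1 x x" using Riso[OF that] .
    also have "\<dots> = 0" using ultra_onD(4)[OF u1 xy(1) xy(1)] .
    finally show ?thesis using ultra_onD(2)[OF u2 xy(2,3)] by simp
  qed
  have domR: "\<exists>y. (x, y) \<in> R" if xX: "x \<in> X" for x
  proof -
    obtain n where "x = ex n" using xX rX by blast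
    then have "x \<in> fst ` C (Suc n)" using Cstep by blast
    then show ?thesis unfolding R_def by force
  qed
  have ranR: "\<exists>x. (x, y) \<in> R" if yY: "y \<in> Y" for y
  proof -
    obtain n where "y = ey n" using yY rY by blast
    then have "y \<in> snd ` C (Suc n)" using Cstep by blast
    then show ?thesis unfolding R_def by force
  qed
  define f where "f x = (SOME y. (x, y) \<in> R)" for x
  have fR: "(x, f x) \<in> R" if "x \<in> X" for x
    unfolding f_def using someI_ex[OF domR[OF that]] .
  have fiso: "\<forall>x\<in>X. \<forall>y\<in>X. d2 (f x) (f y) = d1 x y"
  proof (intro ballI)
    fix x y assume "x \<in> X" "y \<in> X"
    show "d2 (f x) (f y) = d1 x y" by (rule Riso[OF fR[OF \<open>x \<in> X\<close>] fR[OF \<open>y \<in> X\<close>]])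
  qed
  have "inj_on f X"
  proof (rule inj_onI)
    fix x x' assume xx: "x \<in> X" "x' \<in> X" "f x = f x'"
    have fx: "f x \<in> Y" using fR[OF xx(1)] RXY by auto
    have "d1 x x' = d2 (f x) (f x')" using fiso xx(1,2) by simp
    also have "\<dots> = 0" using xx(3) ultra_onD(4)[OF u2 fx fx] by simp
    finally show "x = x'" using ultra_onD(2)[OF u1 xx(1,2)] by simp
  qed
  moreover have "f ` X = Y"
  proof
    show "f ` X \<subseteq> Y" using fR RXY by blast
    show "Y \<subseteq> f ` X"
    proof
      fix y assume "y \<in> Y"
      then obtain x where xy: "(x, y) \<in> R" using ranR by blast
      then have "x \<in> X" using RXY by auto
      then have "f x = y" using Rfun[OF fR xy] by simp
      then show "y \<in> f ` X" using \<open>x \<in> X\<close> by blast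
    qed
  qed
  moreover have "\<forall>a\<in>F. f a = p a"
  proof
    fix a assume "a \<in> F"
    then have "(a, p a) \<in> C 0" using C0 unfolding R0_def by simp
    then have "(a, p a) \<in> R" unfolding R_def by blast
    moreover have "a \<in> X" using F(2) \<open>a \<in> F\<close> by auto
    ultimately show "f a = p a" using Rfun[OF fR[OF \<open>a \<in> X\<close>]] by simp
  qed
  ultimately have "bij_betw f X Y \<and> (\<forall>x\<in>X. \<forall>y\<in>X. d2 (f x) (f y) = d1 x y) \<and> (\<forall>a\<in>F. f a = p a)"
    using fiso unfolding bij_betw_def by simp
  then show ?thesis by blast
qed




lemma ultra_on_D: assumes "ultra_on X d" "D \<in> autQ" shows "ultra_on X (\<lambda>x y. D (d x y))"
  unfolding ultra_on_def
proof (intro ballI conjI)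
  fix x y assume xy: "x \<in> X" "y \<in> X"
  show "0 \<le> D (d x y)" using autQ_nonneg[OF assms(2) ultra_onD(1)[OF assms(1) xy]] .
  show "D (d x y) = 0 \<longleftrightarrow> x = y"
    using ultra_onD(2)[OF assms(1) xy] autQ_eq_iff[OF assms(2), of "d x y" 0] autQ_zero[OF assms(2)] by simp
  show "D (d x y) = D (d y x)" using ultra_onD(3)[OF assms(1) xy] by simp
  fix z assume z: "z \<in> X"
  show "D (d x z) \<le> max (D (d x y)) (D (d y z))"
    using ultra_onD(5)[OF assms(1) xy z] autQ_le_iff[OF assms(2)] autQ_max[OF assms(2)] by metis
qed

lemma ury_on_D: assumes "ury_on X d" "D \<in> autQ" shows "ury_on X (\<lambda>x y. D (d x y))"
  unfolding ury_on_def
proof (intro allI impI)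
  fix A r assume H: "finite A \<and> A \<subseteq> X \<and> (\<forall>a\<in>A. 0 < r a)
        \<and> (\<forall>a\<in>A. \<forall>b\<in>A. D (d a b) \<le> max (r a) (r b) \<and> r a \<le> max (D (d a b)) (r b))"
  have iD: "inv D \<in> autQ" using autQ_inv[OF assms(2)] .
  define r' where "r' a = inv D (r a)" for a
  have "\<forall>a\<in>A. 0 < r' a" using H autQ_inv_pos[OF assms(2)] unfolding r'_def by simp
  moreover have "\<forall>a\<in>A. \<forall>b\<in>A. d a b \<le> max (r' a) (r' b) \<and> r' a \<le> max (d a b) (r' b)"
  proof (intro ballI)
    fix a b assume ab: "a \<in> A" "b \<in> A"
    have 1: "D (d a b) \<le> max (r a) (r b)" "r a \<le> max (D (d a b)) (r b)" using H ab by auto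
    have "inv D (D (d a b)) \<le> inv D (max (r a) (r b))" using 1(1) autQ_le_iff[OF iD] by simp
    then have 2: "d a b \<le> max (r' a) (r' b)" unfolding r'_def using autQ_max[OF iD] autQ_inv_f[OF assms(2)] by simp
    have "inv D (r a) \<le> inv D (max (D (d a b)) (r b))" using 1(2) autQ_le_iff[OF iD] by simp
    then have 3: "r' a \<le> max (d a b) (r' b)" unfolding r'_def using autQ_max[OF iD] autQ_inv_f[OF assms(2)] by simp
    show "d a b \<le> max (r' a) (r' b) \<and> r' a \<le> max (d a b) (r' b)" using 2 3 by simp
  qed
  ultimately have "\<exists>z\<in>X. \<forall>a\<in>A. d z a = r' a"
    using assms(1)[unfolded ury_on_def, rule_format, of A r'] H by simp
  then obtain z where z: "z \<in> X" "\<forall>a\<in>A. d z a = r' a" by blast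
  have "\<forall>a\<in>A. D (d z a) = r a" using z(2) autQ_f_inv[OF assms(2)] unfolding r'_def by simp
  then show "\<exists>z\<in>X. \<forall>a\<in>A. D (d z a) = r a" using z(1) by blast
qed

lemma BF_D:
  assumes cX: "countable X" and cY: "countable Y"
    and u1: "ultra_on X d1" and u2: "ultra_on Y d2"
    and ur1: "ury_on X d1" and ur2: "ury_on Y d2" and D: "D \<in> autQ"
    and F: "finite F" "F \<subseteq> X" "p ` F \<subseteq> Y"
    and iso: "\<forall>a\<in>F. \<forall>b\<in>F. d2 (p a) (p b) = D (d1 a b)"
  shows "\<exists>f. bij_betw f X Y \<and> (\<forall>x\<in>X. \<forall>y\<in>X. d2 (f x) (f y) = D (d1 x y)) \<and> (\<forall>a\<in>F. f a = p a)"
  using BF[OF cX cY ultra_on_D[OF u1 D] u2 ury_on_D[OF ur1 D] ur2 F iso] .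

section \<open>The concrete model\<close>

definition Mset :: "(rat \<Rightarrow> nat) set" where
  "Mset = {x. finite {q. x q \<noteq> 0} \<and> (\<forall>q\<le>0. x q = 0)}"

definition dM :: "(rat \<Rightarrow> nat) \<Rightarrow> (rat \<Rightarrow> nat) \<Rightarrow> rat" where
  "dM x y = (if x = y then 0 else Max {q. x q \<noteq> y q})"

lemma Mset_D: "x \<in> Mset \<Longrightarrow> finite {q. x q \<noteq> 0}" "x \<in> Mset \<Longrightarrow> q \<le> 0 \<Longrightarrow> x q = 0"
  unfolding Mset_def by auto

lemma M_diff_finite: assumes "x \<in> Mset" "y \<in> Mset" shows "finite {q. x q \<noteq> y q}"
proof -
  have "{q. x q \<noteq> y q} \<subseteq> {q. x q \<noteq> 0} \<union> {q. y q \<noteq> 0}" by auto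
  then show ?thesis using Mset_D(1)[OF assms(1)] Mset_D(1)[OF assms(2)] finite_subset by blast
qed

lemma M_diff_pos: assumes "x \<in> Mset" "y \<in> Mset" "x q \<noteq> y q" shows "0 < q"
proof (rule ccontr)
  assume "\<not> 0 < q" then have "q \<le> 0" by simp
  then show False using Mset_D(2)[OF assms(1)] Mset_D(2)[OF assms(2)] assms(3) by simp
qed

lemma dM_ge: assumes "x \<in> Mset" "y \<in> Mset" "x q \<noteq> y q" shows "q \<le> dM x y"
proof -
  have "x \<noteq> y" using assms(3) by auto
  then have "dM x y = Max {q. x q \<noteq> y q}" unfolding dM_def by simp
  then show ?thesis using Max_ge[OF M_diff_finite[OF assms(1,2)], of q] assms(3) by simp
qed

lemma dM_at: assumes "x \<in> Mset" "y \<in> Mset" "x \<noteq> y"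
  shows "x (dM x y) \<noteq> y (dM x y)" "0 < dM x y"
proof -
  have ne: "{q. x q \<noteq> y q} \<noteq> {}" using assms(3) by auto
  have e: "dM x y = Max {q. x q \<noteq> y q}" unfolding dM_def using assms(3) by simp
  have "Max {q. x q \<noteq> y q} \<in> {q. x q \<noteq> y q}" using Max_in[OF M_diff_finite[OF assms(1,2)] ne] .
  then show 1: "x (dM x y) \<noteq> y (dM x y)" using e by simp
  show "0 < dM x y" using M_diff_pos[OF assms(1,2) 1] .
qed

lemma dM_above: assumes "x \<in> Mset" "y \<in> Mset" "dM x y < q" shows "x q = y q"
  using dM_ge[OF assms(1,2), of q] assms(3) by (meson not_le)

lemma dM_eqI: assumes "x \<in> Mset" "y \<in> Mset" "x t \<noteq> y t" "\<And>q. t < q \<Longrightarrow> x q = y q"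
  shows "dM x y = t"
proof -
  have 1: "t \<le> dM x y" using dM_ge[OF assms(1-3)] .
  have "x \<noteq> y" using assms(3) by auto
  then have "x (dM x y) \<noteq> y (dM x y)" using dM_at[OF assms(1,2)] by simp
  then have "\<not> t < dM x y" using assms(4) by blast
  then show ?thesis using 1 by simp
qed

lemma dM_self [simp]: "dM x x = 0" unfolding dM_def by simp

lemma dM_sym: "dM x y = dM y x"
proof -
  have "{q. x q \<noteq> y q} = {q. y q \<noteq> x q}" by auto
  then show ?thesis unfolding dM_def by auto
qed

lemma dM_nonneg: assumes "x \<in> Mset" "y \<in> Mset" shows "0 \<le> dM x y"
  using dM_at[OF assms] by (cases "x = y") (auto simp: less_imp_le)

lemma dM_zero_iff: assumes "x \<in> Mset" "y \<in> Mset" shows "dM x y = 0 \<longleftrightarrow> x = y"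
  using dM_at[OF assms] by (cases "x = y") auto

lemma dM_tri: assumes "x \<in> Mset" "y \<in> Mset" "z \<in> Mset" shows "dM x z \<le> max (dM x y) (dM y z)"
proof (cases "x = z")
  case True then show ?thesis using dM_nonneg[OF assms(1,2)] by simp
next
  case False
  define t where "t = dM x z"
  have "x t \<noteq> z t" using dM_at(1)[OF assms(1,3) False] unfolding t_def .
  then have "x t \<noteq> y t \<or> y t \<noteq> z t" by auto
  then show ?thesis
  proof
    assume "x t \<noteq> y t" then have "t \<le> dM x y" using dM_ge[OF assms(1,2)] by simp
    then show ?thesis unfolding t_def by simp
  next
    assume "y t \<noteq> z t" then have "t \<le> dM y z" using dM_ge[OF assms(2,3)] by simp
    then show ?thesis unfolding t_def by simp
  qed
qed

lemma ultra_M: "ultra_on Mset dM"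
  unfolding ultra_on_def
proof (intro ballI conjI)
  fix x y z assume xyz: "x \<in> Mset" "y \<in> Mset" "z \<in> Mset"
  show "dM x z \<le> max (dM x y) (dM y z)" by (rule dM_tri[OF xyz])
next
  fix x y assume xy: "x \<in> Mset" "y \<in> Mset"
  show "0 \<le> dM x y" by (rule dM_nonneg[OF xy])
  show "dM x y = 0 \<longleftrightarrow> x = y" by (rule dM_zero_iff[OF xy])
  show "dM x y = dM y x" by (rule dM_sym)
qed


lemma ury_M: "ury_on Mset dM"
  unfolding ury_on_def
proof (intro allI impI)
  fix A r assume H: "finite A \<and> A \<subseteq> Mset \<and> (\<forall>a\<in>A. 0 < r a)
        \<and> (\<forall>a\<in>A. \<forall>b\<in>A. dM a b \<le> max (r a) (r b) \<and> r a \<le> max (dM a b) (r b))"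
  have fA: "finite A" and AM: "A \<subseteq> Mset" and rpos: "\<And>a. a \<in> A \<Longrightarrow> 0 < r a"
    and c1: "\<And>a b. a \<in> A \<Longrightarrow> b \<in> A \<Longrightarrow> dM a b \<le> max (r a) (r b)"
    and c2: "\<And>a b. a \<in> A \<Longrightarrow> b \<in> A \<Longrightarrow> r a \<le> max (dM a b) (r b)"
    using H by auto
  show "\<exists>z\<in>Mset. \<forall>a\<in>A. dM z a = r a"
  proof (cases "A = {}")
    case True
    have "(\<lambda>_. 0) \<in> Mset" unfolding Mset_def by simp
    then show ?thesis using True by blast
  next
    case False
    have "Min (r ` A) \<in> r ` A" using Min_in[OF finite_imageI[OF fA]] False by simp
    then obtain a0 where a0: "a0 \<in> A" "r a0 = Min (r ` A)" by auto
    have rmin: "r a0 \<le> r a" if "a \<in> A" for a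
      using a0(2) Min_le[OF finite_imageI[OF fA], of "r a" r] that by simp
    define \<rho> where "\<rho> = r a0"
    have \<rho>pos: "0 < \<rho>" using rpos[OF a0(1)] unfolding \<rho>_def .
    define m where "m = Max ((\<lambda>a. a \<rho>) ` A)"
    have mge: "a \<rho> \<le> m" if "a \<in> A" for a
      unfolding m_def using Max_ge[OF finite_imageI[OF fA], of "a \<rho>" "\<lambda>a. a \<rho>"] that by simp
    define z where "z q = (if \<rho> < q then a0 q else if q = \<rho> then Suc m else 0)" for q
    have a0M: "a0 \<in> Mset" using AM a0(1) by auto
    have zM: "z \<in> Mset"
    proof -
      have "{q. z q \<noteq> 0} \<subseteq> {q. a0 q \<noteq> 0} \<union> {\<rho>}" unfolding z_def by auto
      then have "finite {q. z q \<noteq> 0}" using Mset_D(1)[OF a0M] finite_subset by blast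
      moreover have "z q = 0" if "q \<le> 0" for q using that \<rho>pos unfolding z_def by auto
      ultimately show ?thesis unfolding Mset_def by simp
    qed
    have "dM z a = r a" if aA: "a \<in> A" for a
    proof -
      have aM: "a \<in> Mset" using AM aA by auto
      show ?thesis
      proof (cases "\<rho> < dM a a0")
        case True
        have ra: "r a = dM a a0"
        proof -
          have "r a \<le> max (dM a a0) (r a0)" using c2[OF aA a0(1)] .
          then have 1: "r a \<le> dM a a0" using True unfolding \<rho>_def by simp
          have "dM a a0 \<le> max (r a) (r a0)" using c1[OF aA a0(1)] .
          then have "dM a a0 \<le> r a" using True unfolding \<rho>_def by (simp add: max_def split: if_splits)
          then show ?thesis using 1 by simp
        qed
        have "dM z a = dM a a0"
        proof (rule dM_eqI[OF zM aM])
          have "a \<noteq> a0" using True \<rho>pos by auto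
          then have "a (dM a a0) \<noteq> a0 (dM a a0)" using dM_at(1)[OF aM a0M] by simp
          then show "z (dM a a0) \<noteq> a (dM a a0)" using True unfolding z_def by simp
          fix q assume "dM a a0 < q"
          then have "a q = a0 q" using dM_above[OF aM a0M] by simp
          then show "z q = a q" using \<open>dM a a0 < q\<close> True unfolding z_def by simp
        qed
        then show ?thesis using ra by simp
      next
        case False
        have ra: "r a = \<rho>"
        proof -
          have "r a \<le> max (dM a a0) (r a0)" using c2[OF aA a0(1)] .
          then have "r a \<le> \<rho>" using False unfolding \<rho>_def by simp
          then show ?thesis using rmin[OF aA] unfolding \<rho>_def by simp
        qed
        have "dM z a = \<rho>"
        proof (rule dM_eqI[OF zM aM])
          show "z \<rho> \<noteq> a \<rho>" using mge[OF aA] unfolding z_def by simp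
          fix q assume "\<rho> < q"
          then have "a q = a0 q" using dM_above[OF aM a0M] False by simp
          then show "z q = a q" using \<open>\<rho> < q\<close> unfolding z_def by simp
        qed
        then show ?thesis using ra by simp
      qed
    qed
    then show ?thesis using zM by blast
  qed
qed

lemma countable_M: "countable Mset"
proof -
  define g where "g x = {(q, x q) | q. x q \<noteq> 0}" for x :: "rat \<Rightarrow> nat"
  have "inj_on g Mset"
  proof (rule inj_onI)
    fix x y assume "x \<in> Mset" "y \<in> Mset" "g x = g y"
    show "x = y"
    proof
      fix q
      show "x q = y q"
      proof (cases "x q = 0")
        case True
        show ?thesis
        proof (rule ccontr)
          assume "x q \<noteq> y q"
          then have "(q, y q) \<in> g y" using True unfolding g_def by auto
          then have "(q, y q) \<in> g x" using \<open>g x = g y\<close> by simp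
          then show False using \<open>x q \<noteq> y q\<close> unfolding g_def by auto
        qed
      next
        case False
        then have "(q, x q) \<in> g x" unfolding g_def by auto
        then have "(q, x q) \<in> g y" using \<open>g x = g y\<close> by simp
        then show ?thesis unfolding g_def by auto
      qed
    qed
  qed
  moreover have "g ` Mset \<subseteq> Collect finite"
  proof
    fix S assume "S \<in> g ` Mset"
    then obtain x where x: "x \<in> Mset" "S = g x" by blast
    have "g x = (\<lambda>q. (q, x q)) ` {q. x q \<noteq> 0}" unfolding g_def by auto
    then show "S \<in> Collect finite" using Mset_D(1)[OF x(1)] x(2) by simp
  qed
  then have "countable (g ` Mset)" using countable_Collect_finite countable_subset by blast
  ultimately show ?thesis using countable_image_inj_on by blast
qed

section \<open>The action of Aut(Q>=0) on the model\<close>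

definition act :: "(rat \<Rightarrow> rat) \<Rightarrow> (rat \<Rightarrow> nat) \<Rightarrow> (rat \<Rightarrow> nat)" where
  "act h x = x \<circ> inv h"

lemma act_M: assumes "h \<in> autQ" "x \<in> Mset" shows "act h x \<in> Mset"
proof -
  have "{q. act h x q \<noteq> 0} \<subseteq> h ` {q. x q \<noteq> 0}"
  proof
    fix q assume "q \<in> {q. act h x q \<noteq> 0}"
    then have "x (inv h q) \<noteq> 0" unfolding act_def by simp
    moreover have "q = h (inv h q)" using autQ_f_inv[OF assms(1)] by simp
    ultimately show "q \<in> h ` {q. x q \<noteq> 0}" by blast
  qed
  then have "finite {q. act h x q \<noteq> 0}" using Mset_D(1)[OF assms(2)] finite_subset by blast
  moreover have "act h x q = 0" if "q \<le> 0" for q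
  proof -
    have "inv h q \<le> 0" using autQ_le_iff[OF autQ_inv[OF assms(1)], of q 0] that
        autQ_zero[OF autQ_inv[OF assms(1)]] by simp
    then show ?thesis unfolding act_def using Mset_D(2)[OF assms(2)] by simp
  qed
  ultimately show ?thesis unfolding Mset_def by simp
qed

lemma act_dM: assumes "h \<in> autQ" "x \<in> Mset" "y \<in> Mset"
  shows "dM (act h x) (act h y) = h (dM x y)"
proof (cases "x = y")
  case True then show ?thesis using autQ_zero[OF assms(1)] by simp
next
  case False
  have ih: "inv h \<in> autQ" using autQ_inv[OF assms(1)] .
  show ?thesis
  proof (rule dM_eqI[OF act_M[OF assms(1,2)] act_M[OF assms(1,3)]])
    show "act h x (h (dM x y)) \<noteq> act h y (h (dM x y))"
      unfolding act_def using dM_at(1)[OF assms(2,3) False] autQ_inv_f[OF assms(1)] by simp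
    fix q assume "h (dM x y) < q"
    then have "inv h (h (dM x y)) < inv h q" using autQ_less_iff[OF ih] by simp
    then have "dM x y < inv h q" using autQ_inv_f[OF assms(1)] by simp
    then show "act h x q = act h y q" unfolding act_def using dM_above[OF assms(2,3)] by simp
  qed
qed

lemma act_comp: assumes "h \<in> autQ" "h' \<in> autQ" shows "act (h \<circ> h') x = act h (act h' x)"
  unfolding act_def using o_inv_distrib[OF autQ_bij[OF assms(1)] autQ_bij[OF assms(2)]] by (simp add: o_assoc)

lemma act_id: "act id x = x" unfolding act_def by simp

lemma act_inv: assumes "h \<in> autQ" shows "act (inv h) (act h x) = x"
proof -
  have "act (inv h) (act h x) = act (inv h \<circ> h) x"
    using act_comp[OF autQ_inv[OF assms] assms] by simp
  also have "inv h \<circ> h = id" using autQ_inv_comp[OF assms] .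
  finally show ?thesis using act_id by (simp add: id_def)
qed

lemma act_bij: assumes "h \<in> autQ" shows "bij_betw (act h) Mset Mset"
proof (rule bij_betw_byWitness[where f' = "act (inv h)"])
  show "\<forall>a\<in>Mset. act (inv h) (act h a) = a" using act_inv[OF assms] by simp
  have "act h (act (inv h) a) = a" for a
    using act_inv[OF autQ_inv[OF assms]] inv_inv_eq[OF autQ_bij[OF assms]] by simp
  then show "\<forall>a'\<in>Mset. act h (act (inv h) a') = a'" by simp
  show "act h ` Mset \<subseteq> Mset" using act_M[OF assms] by blast
  show "act (inv h) ` Mset \<subseteq> Mset" using act_M[OF autQ_inv[OF assms]] by blast
qed

lemma act_local:
  assumes "h \<in> autQ" "h' \<in> autQ" "\<forall>q\<in>{q. x q \<noteq> 0}. h' q = h q"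
  shows "act h' x = act h x"
proof
  fix q
  show "act h' x q = act h x q"
  proof (cases "x (inv h q) \<noteq> 0")
    case True
    then have "h' (inv h q) = h (inv h q)" using assms(3) by simp
    then have "h' (inv h q) = q" using autQ_f_inv[OF assms(1)] by simp
    then have "inv h' q = inv h q" using autQ_inv_f[OF assms(2), of "inv h q"] by simp
    then show ?thesis unfolding act_def by simp
  next
    case False
    have "x (inv h' q) = 0"
    proof (rule ccontr)
      assume "x (inv h' q) \<noteq> 0"
      then have "h (inv h' q) = h' (inv h' q)" using assms(3) by simp
      then have "h (inv h' q) = q" using autQ_f_inv[OF assms(2)] by simp
      then have "inv h q = inv h' q" using autQ_inv_f[OF assms(1), of "inv h' q"] by simp
      then show False using False \<open>x (inv h' q) \<noteq> 0\<close> by simp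
    qed
    then show ?thesis using False unfolding act_def by simp
  qed
qed




lemma openin_gen_nbhd:
  assumes "\<And>x. x \<in> W \<Longrightarrow> \<exists>V\<in>S. x \<in> V \<and> V \<subseteq> W"
  shows "openin (topology_generated_by S) W"
proof -
  have "W = \<Union>{V\<in>S. V \<subseteq> W}" using assms by blast
  moreover have "generate_topology_on S (\<Union>{V\<in>S. V \<subseteq> W})"
    by (rule generate_topology_on.UN) (auto intro: generate_topology_on.Basis)
  ultimately show ?thesis by (simp add: openin_topology_generated_by_iff)
qed

lemma gen_basis_nbhd:
  assumes cl: "\<And>V1 V2 x. V1 \<in> S \<Longrightarrow> V2 \<in> S \<Longrightarrow> x \<in> V1 \<Longrightarrow> x \<in> V2 \<Longrightarrow> \<exists>V\<in>S. x \<in> V \<and> V \<subseteq> V1 \<inter> V2"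
    and op: "openin (topology_generated_by S) W"
  shows "\<forall>x\<in>W. \<exists>V\<in>S. x \<in> V \<and> V \<subseteq> W"
proof -
  have "generate_topology_on S W" using op by (simp add: openin_topology_generated_by_iff)
  then show ?thesis
  proof (induction rule: generate_topology_on.induct)
    case Empty then show ?case by simp
  next
    case (Int a b)
    show ?case
    proof
      fix x assume "x \<in> a \<inter> b"
      then obtain V1 V2 where "V1 \<in> S" "x \<in> V1" "V1 \<subseteq> a" "V2 \<in> S" "x \<in> V2" "V2 \<subseteq> b"
        using Int.IH by blast
      then obtain V where "V \<in> S" "x \<in> V" "V \<subseteq> V1 \<inter> V2" using cl by blast
      then show "\<exists>V\<in>S. x \<in> V \<and> V \<subseteq> a \<inter> b" using \<open>V1 \<subseteq> a\<close> \<open>V2 \<subseteq> b\<close> by blast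
    qed
  next
    case (UN K)
    show ?case
    proof
      fix x assume "x \<in> \<Union>K"
      then obtain k where "k \<in> K" "x \<in> k" by blast
      then obtain V where "V \<in> S" "x \<in> V" "V \<subseteq> k" using UN.IH by blast
      then show "\<exists>V\<in>S. x \<in> V \<and> V \<subseteq> \<Union>K" using \<open>k \<in> K\<close> by blast
    qed
  next
    case (Basis s) then show ?case by blast
  qed
qed

lemma autQ_basis_mem:
  assumes "D0 \<in> autQ" "finite B" "B \<subseteq> Qnn"
  shows "{D \<in> autQ. \<forall>q\<in>B. D q = D0 q} \<in> {{D \<in> autQ. \<forall>q\<in>B. D q = D0 q} | D0 B. D0 \<in> autQ \<and> finite B \<and> B \<subseteq> Qnn}"
  using assms by blast

lemma autQ_open_basic:
  assumes "D0 \<in> autQ" "finite B" "B \<subseteq> Qnn"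
  shows "openin autQ_topology {D \<in> autQ. \<forall>q\<in>B. D q = D0 q}"
  unfolding autQ_topology_def by (rule topology_generated_by_Basis[OF autQ_basis_mem[OF assms]])

lemma topspace_autQ: "topspace autQ_topology = autQ"
proof -
  have "\<Union>{{D \<in> autQ. \<forall>q\<in>B. D q = D0 q} | D0 B. D0 \<in> autQ \<and> finite B \<and> B \<subseteq> Qnn} = autQ"
  proof
    show "autQ \<subseteq> \<Union>{{D \<in> autQ. \<forall>q\<in>B. D q = D0 q} | D0 B. D0 \<in> autQ \<and> finite B \<and> B \<subseteq> Qnn}"
    proof
      fix D assume "D \<in> autQ"
      then have "D \<in> {D' \<in> autQ. \<forall>q\<in>{}. D' q = D q}" by simp
      moreover have "{D' \<in> autQ. \<forall>q\<in>{}. D' q = D q} \<in> {{D \<in> autQ. \<forall>q\<in>B. D q = D0 q} | D0 B. D0 \<in> autQ \<and> finite B \<and> B \<subseteq> Qnn}"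
        using autQ_basis_mem[OF \<open>D \<in> autQ\<close>, of "{}"] by simp
      ultimately show "D \<in> \<Union>{{D \<in> autQ. \<forall>q\<in>B. D q = D0 q} | D0 B. D0 \<in> autQ \<and> finite B \<and> B \<subseteq> Qnn}"
        by blast
    qed
  qed blast
  then show ?thesis unfolding autQ_topology_def by simp
qed

lemma autQ_openI:
  assumes "W \<subseteq> autQ"
    and "\<And>h. h \<in> W \<Longrightarrow> \<exists>B. finite B \<and> B \<subseteq> Qnn \<and> (\<forall>h'\<in>autQ. (\<forall>q\<in>B. h' q = h q) \<longrightarrow> h' \<in> W)"
  shows "openin autQ_topology W"
  unfolding autQ_topology_def
proof (rule openin_gen_nbhd)
  fix h assume "h \<in> W"
  obtain B where B: "finite B" "B \<subseteq> Qnn" "\<forall>h'\<in>autQ. (\<forall>q\<in>B. h' q = h q) \<longrightarrow> h' \<in> W"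
    using assms(2)[OF \<open>h \<in> W\<close>] by (elim exE conjE)
  have hQ: "h \<in> autQ" using \<open>h \<in> W\<close> assms(1) by (rule subsetD[rotated])
  show "\<exists>V\<in>{{D \<in> autQ. \<forall>q\<in>B. D q = D0 q} | D0 B. D0 \<in> autQ \<and> finite B \<and> B \<subseteq> Qnn}. h \<in> V \<and> V \<subseteq> W"
  proof (intro bexI conjI)
    show "h \<in> {D \<in> autQ. \<forall>q\<in>B. D q = h q}" using hQ by simp
    show "{D \<in> autQ. \<forall>q\<in>B. D q = h q} \<subseteq> W" using B(3) by auto
    show "{D \<in> autQ. \<forall>q\<in>B. D q = h q} \<in> {{D \<in> autQ. \<forall>q\<in>B. D q = D0 q} | D0 B. D0 \<in> autQ \<and> finite B \<and> B \<subseteq> Qnn}"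
      using autQ_basis_mem[OF hQ B(1,2)] .
  qed
qed

lemma dc_autD: assumes "p \<in> dc_aut d"
  shows "bij (fst p)" "snd p \<in> autQ" "\<And>x y. d (fst p x) (fst p y) = snd p (d x y)"
  using assms unfolding dc_aut_def by auto

lemma dc_autI: assumes "bij f" "D \<in> autQ" "\<And>x y. d (f x) (f y) = D (d x y)"
  shows "(f, D) \<in> dc_aut d"
  using assms unfolding dc_aut_def by simp

lemma dc_mult_aut: assumes "p \<in> dc_aut d" "q \<in> dc_aut d" shows "dc_mult p q \<in> dc_aut d"
proof -
  have "bij (fst p \<circ> fst q)" using dc_autD(1)[OF assms(1)] dc_autD(1)[OF assms(2)] bij_comp by blast
  moreover have "snd p \<circ> snd q \<in> autQ" using autQ_comp dc_autD(2) assms by blast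
  moreover have "d ((fst p \<circ> fst q) x) ((fst p \<circ> fst q) y) = (snd p \<circ> snd q) (d x y)" for x y
    using dc_autD(3)[OF assms(1)] dc_autD(3)[OF assms(2)] by simp
  ultimately show ?thesis unfolding dc_mult_def by (simp add: dc_autI)
qed

lemma dc_id_aut: "(id, id) \<in> dc_aut d"
  by (rule dc_autI) (auto simp: autQ_id)

lemma dc_iso_sub: "dc_iso d \<subseteq> dc_aut d" unfolding dc_iso_def by auto

lemma bij_idem_id: assumes "bij F" "F = F \<circ> F" shows "F = id"
proof
  fix x
  have "F x = F (F x)" using fun_cong[OF assms(2), of x] by simp
  then show "F x = id x" using bij_is_inj[OF assms(1)] by (simp add: inj_eq)
qed

locale hom_section =
  fixes d :: "'c \<Rightarrow> 'c \<Rightarrow> rat" and s :: "(rat \<Rightarrow> rat) \<Rightarrow> ('c \<Rightarrow> 'c) \<times> (rat \<Rightarrow> rat)"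
  assumes s_aut: "\<And>h. h \<in> autQ \<Longrightarrow> s h \<in> dc_aut d"
    and s_hom: "\<And>h h'. h \<in> autQ \<Longrightarrow> h' \<in> autQ \<Longrightarrow> s (h \<circ> h') = dc_mult (s h) (s h')"
    and s_snd: "\<And>h. h \<in> autQ \<Longrightarrow> snd (s h) = h"
begin

lemma s_id: "s id = (id, id)"
proof -
  have "s id = dc_mult (s id) (s id)" using s_hom[OF autQ_id autQ_id] by simp
  then have "fst (s id) = fst (dc_mult (s id) (s id))" by (rule arg_cong)
  then have "fst (s id) = fst (s id) \<circ> fst (s id)" unfolding dc_mult_def by simp
  then have "fst (s id) = id" using bij_idem_id dc_autD(1)[OF s_aut[OF autQ_id]] by blast
  moreover have "snd (s id) = id" using s_snd[OF autQ_id] .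
  ultimately show ?thesis by (simp add: prod_eq_iff)
qed

lemma s_inv_cancel: assumes "h \<in> autQ"
  shows "fst (s h) \<circ> fst (s (inv h)) = id" "fst (s (inv h)) \<circ> fst (s h) = id"
proof -
  have "s (h \<circ> inv h) = dc_mult (s h) (s (inv h))" using s_hom[OF assms autQ_inv[OF assms]] .
  then show "fst (s h) \<circ> fst (s (inv h)) = id" using autQ_comp_inv[OF assms] s_id unfolding dc_mult_def by simp
  have "s (inv h \<circ> h) = dc_mult (s (inv h)) (s h)" using s_hom[OF autQ_inv[OF assms] assms] .
  then show "fst (s (inv h)) \<circ> fst (s h) = id" using autQ_inv_comp[OF assms] s_id unfolding dc_mult_def by simp
qed

lemma sd_identity:
  assumes "x \<in> dc_iso d \<times> autQ" "y \<in> dc_iso d \<times> autQ"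
  shows "dc_mult (fst (sd_mult s x y)) (s (snd (sd_mult s x y)))
           = dc_mult (dc_mult (fst x) (s (snd x))) (dc_mult (fst y) (s (snd y)))"
proof -
  have hx: "snd x \<in> autQ" and hy: "snd y \<in> autQ" using assms by auto
  have "s (snd x \<circ> snd y) = dc_mult (s (snd x)) (s (snd y))" using s_hom[OF hx hy] .
  moreover have "fst (dc_inv (s (snd x))) \<circ> fst (s (snd x)) = id"
  proof -
    have "bij (fst (s (snd x)))" using dc_autD(1)[OF s_aut[OF hx]] .
    then show ?thesis unfolding dc_inv_def by (simp add: bij_is_inj inv_o_cancel)
  qed
  moreover have "snd (dc_inv (s (snd x))) \<circ> snd (s (snd x)) = id"
  proof
    fix q
    have sx: "snd (s (snd x)) = snd x" using s_snd[OF hx] .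
    show "(snd (dc_inv (s (snd x))) \<circ> snd (s (snd x))) q = id q"
    proof (cases "0 \<le> q")
      case True
      then have "snd x q \<in> Qnn" using autQ_nonneg[OF hx True] by (simp add: Qnn_def)
      moreover have "inv_into Qnn (snd x) (snd x q) = q"
        using inv_into_f_f[OF bij_betw_imp_inj_on[OF autQ_D(1)[OF hx]]] True by (simp add: Qnn_def)
      ultimately show ?thesis unfolding dc_inv_def using sx autQ_nonneg[OF hx True] by simp
    next
      case False
      then have "snd x q = q" using autQ_D(3)[OF hx] by simp
      then show ?thesis unfolding dc_inv_def using sx False by simp
    qed
  qed
  ultimately have e0: "s (snd x \<circ> snd y) = (fst (s (snd x)) \<circ> fst (s (snd y)), snd x \<circ> snd y)"
    and e1: "\<And>G. fst (dc_inv (s (snd x))) \<circ> (fst (s (snd x)) \<circ> G) = G"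
    and e2: "\<And>G. snd (dc_inv (s (snd x))) \<circ> (snd x \<circ> G) = G"
    using s_snd[OF hx] s_snd[OF hy] unfolding dc_mult_def by (simp_all add: comp_assoc[symmetric])
  show ?thesis unfolding sd_mult_def dc_mult_def
    by (simp add: e0 comp_assoc e1 e2 s_snd[OF hx] s_snd[OF hy] del: comp_apply)
qed

end

lemma projection_splitsI:
  assumes top: "topspace T = dc_aut d"
    and csnd: "continuous_map T autQ_topology snd"
    and osnd: "open_map T autQ_topology snd"
    and hs: "hom_section d s"
    and cs: "continuous_map autQ_topology T s"
    and cf: "continuous_map (prod_topology (subtopology T (dc_iso d)) autQ_topology) T
              (\<lambda>x. dc_mult (fst x) (s (snd x)))"
    and cg: "continuous_map T T (\<lambda>p. dc_mult p (s (inv (snd p))))"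
  shows "projection_splits d T"
proof -
  interpret hom_section d s by (rule hs)
  have surj: "snd ` dc_aut d = autQ"
  proof
    show "snd ` dc_aut d \<subseteq> autQ" using dc_autD(2) by blast
    show "autQ \<subseteq> snd ` dc_aut d"
    proof
      fix h assume "h \<in> autQ"
      then have "snd (s h) = h" "s h \<in> dc_aut d" using s_snd s_aut by auto
      then show "h \<in> snd ` dc_aut d" by (metis image_eqI)
    qed
  qed
  have hom: "\<forall>p\<in>dc_aut d. \<forall>q\<in>dc_aut d. snd (dc_mult p q) = snd p \<circ> snd q"
    unfolding dc_mult_def by simp
  have ker: "{p \<in> dc_aut d. snd p = id} = dc_iso d" unfolding dc_iso_def by simp
  define g where "g p = (dc_mult p (s (inv (snd p))), snd p)" for p
  have homeo: "homeomorphic_map (prod_topology (subtopology T (dc_iso d)) autQ_topology) T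
              (\<lambda>x. dc_mult (fst x) (s (snd x)))"
    unfolding homeomorphic_map_maps
  proof (rule exI[where x = g], unfold homeomorphic_maps_def, intro conjI)
    show "continuous_map (prod_topology (subtopology T (dc_iso d)) autQ_topology) T
              (\<lambda>x. dc_mult (fst x) (s (snd x)))" by (rule cf)
    have "continuous_map T (subtopology T (dc_iso d)) (\<lambda>p. dc_mult p (s (inv (snd p))))"
    proof (rule continuous_map_into_subtopology[OF cg])
      show "(\<lambda>p. dc_mult p (s (inv (snd p)))) \<in> topspace T \<rightarrow> dc_iso d"
      proof
        fix p assume "p \<in> topspace T"
        then have p: "p \<in> dc_aut d" using top by simp
        have "inv (snd p) \<in> autQ" using autQ_inv[OF dc_autD(2)[OF p]] .
        then have "dc_mult p (s (inv (snd p))) \<in> dc_aut d" using dc_mult_aut[OF p s_aut] by blast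
        moreover have "snd (dc_mult p (s (inv (snd p)))) = id"
          unfolding dc_mult_def using s_snd[OF \<open>inv (snd p) \<in> autQ\<close>] autQ_comp_inv[OF dc_autD(2)[OF p]] by simp
        ultimately show "dc_mult p (s (inv (snd p))) \<in> dc_iso d" unfolding dc_iso_def by simp
      qed
    qed
    then show "continuous_map T (prod_topology (subtopology T (dc_iso d)) autQ_topology) g"
      unfolding continuous_map_pairwise g_def o_def using csnd by simp
    show "\<forall>x\<in>topspace (prod_topology (subtopology T (dc_iso d)) autQ_topology).
            g (dc_mult (fst x) (s (snd x))) = x"
    proof
      fix x assume "x \<in> topspace (prod_topology (subtopology T (dc_iso d)) autQ_topology)"
      then have x: "fst x \<in> dc_iso d" "snd x \<in> autQ" using top topspace_autQ dc_iso_sub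
        by (auto simp: mem_Times_iff)
      define n h where "n = fst x" and "h = snd x"
      have sn: "snd n = id" using x(1) unfolding n_def dc_iso_def by simp
      have hQ: "h \<in> autQ" using x(2) unfolding h_def .
      have "dc_mult (dc_mult n (s h)) (s (inv (snd (dc_mult n (s h))))) = n"
      proof -
        have "snd (dc_mult n (s h)) = h" unfolding dc_mult_def using sn s_snd[OF hQ] by simp
        then have "dc_mult (dc_mult n (s h)) (s (inv (snd (dc_mult n (s h)))))
                 = (fst n \<circ> (fst (s h) \<circ> fst (s (inv h))), h \<circ> inv h)"
          unfolding dc_mult_def using sn s_snd[OF hQ] s_snd[OF autQ_inv[OF hQ]] by (simp add: o_assoc)
        also have "\<dots> = (fst n, id)" using s_inv_cancel(1)[OF hQ] autQ_comp_inv[OF hQ] by simp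
        also have "\<dots> = n" using sn by (simp add: prod_eq_iff)
        finally show ?thesis .
      qed
      moreover have "snd (dc_mult n (s h)) = h" unfolding dc_mult_def using sn s_snd[OF hQ] by simp
      ultimately show "g (dc_mult (fst x) (s (snd x))) = x" unfolding g_def n_def h_def by (simp add: prod_eq_iff)
    qed
    show "\<forall>y\<in>topspace T. dc_mult (fst (g y)) (s (snd (g y))) = y"
    proof
      fix p assume "p \<in> topspace T"
      then have p: "p \<in> dc_aut d" using top by simp
      have D: "snd p \<in> autQ" using dc_autD(2)[OF p] .
      have "dc_mult (fst (g p)) (s (snd (g p))) = (fst p \<circ> (fst (s (inv (snd p))) \<circ> fst (s (snd p))),
               snd p \<circ> inv (snd p) \<circ> snd p)"
        unfolding g_def dc_mult_def using s_snd[OF D] s_snd[OF autQ_inv[OF D]] by (simp add: o_assoc)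
      also have "\<dots> = (fst p, snd p)" using s_inv_cancel(2)[OF D] autQ_comp_inv[OF D] by simp
      finally show "dc_mult (fst (g p)) (s (snd (g p))) = p" by simp
    qed
  qed
  have "s \<in> autQ \<rightarrow> dc_aut d" using s_aut by blast
  moreover have "\<forall>h\<in>autQ. \<forall>h'\<in>autQ. s (h \<circ> h') = dc_mult (s h) (s h')" using s_hom by blast
  moreover have "\<forall>h\<in>autQ. snd (s h) = h" using s_snd by blast
  moreover have "\<forall>x\<in>dc_iso d \<times> autQ. \<forall>y\<in>dc_iso d \<times> autQ.
               dc_mult (fst (sd_mult s x y)) (s (snd (sd_mult s x y)))
                 = dc_mult (dc_mult (fst x) (s (snd x))) (dc_mult (fst y) (s (snd y)))"
    using sd_identity by blast
  ultimately show ?thesis unfolding projection_splits_def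
    using csnd osnd surj hom ker cs homeo by blast
qed




section \<open>The pointwise topology on dc_aut\<close>

definition autB :: "('c \<Rightarrow> 'c \<Rightarrow> rat) \<Rightarrow> (('c \<Rightarrow> 'c) \<times> (rat \<Rightarrow> rat)) set set" where
  "autB d = {{p \<in> dc_aut d. (\<forall>x\<in>A. fst p x = fst p0 x) \<and> (\<forall>q\<in>B. snd p q = snd p0 q)}
       | p0 A B. p0 \<in> dc_aut d \<and> finite A \<and> finite B \<and> B \<subseteq> Qnn}"

definition nb :: "('c \<Rightarrow> 'c \<Rightarrow> rat) \<Rightarrow> ('c \<Rightarrow> 'c) \<times> (rat \<Rightarrow> rat) \<Rightarrow> 'c set \<Rightarrow> rat set
   \<Rightarrow> (('c \<Rightarrow> 'c) \<times> (rat \<Rightarrow> rat)) set" where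
  "nb d p0 A B = {p \<in> dc_aut d. (\<forall>x\<in>A. fst p x = fst p0 x) \<and> (\<forall>q\<in>B. snd p q = snd p0 q)}"

lemma aut_topology_eq: "aut_topology d = topology_generated_by (autB d)"
  unfolding aut_topology_def autB_def ..

lemma nb_basis: "p \<in> dc_aut d \<Longrightarrow> finite A \<Longrightarrow> finite B \<Longrightarrow> B \<subseteq> Qnn \<Longrightarrow> nb d p A B \<in> autB d"
  unfolding nb_def autB_def by blast

lemma autB_nb: "V \<in> autB d \<Longrightarrow> \<exists>p0 A B. V = nb d p0 A B \<and> p0 \<in> dc_aut d \<and> finite A \<and> finite B \<and> B \<subseteq> Qnn"
  unfolding nb_def autB_def by blast

lemma nb_open: "p \<in> dc_aut d \<Longrightarrow> finite A \<Longrightarrow> finite B \<Longrightarrow> B \<subseteq> Qnn \<Longrightarrow> openin (aut_topology d) (nb d p A B)"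
  unfolding aut_topology_eq by (rule topology_generated_by_Basis[OF nb_basis])

lemma nb_self: "p \<in> dc_aut d \<Longrightarrow> p \<in> nb d p A B" unfolding nb_def by simp

lemma nb_sub: "nb d p A B \<subseteq> dc_aut d" unfolding nb_def by auto

lemma topspace_aut: "topspace (aut_topology d) = dc_aut d"
proof -
  have "\<Union>(autB d) = dc_aut d"
  proof
    show "\<Union>(autB d) \<subseteq> dc_aut d" unfolding autB_def by auto
    show "dc_aut d \<subseteq> \<Union>(autB d)"
    proof
      fix p assume "p \<in> dc_aut d"
      then have "p \<in> nb d p {} {}" "nb d p {} {} \<in> autB d"
        using nb_self[of p d "{}" "{}"] nb_basis[of p d "{}" "{}"] by auto
      then show "p \<in> \<Union>(autB d)" by blast
    qed
  qed
  then show ?thesis unfolding aut_topology_eq by simp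
qed

lemma aut_openI:
  assumes "W \<subseteq> dc_aut d"
    and "\<And>p. p \<in> W \<Longrightarrow> \<exists>A B. finite A \<and> finite B \<and> B \<subseteq> Qnn \<and> nb d p A B \<subseteq> W"
  shows "openin (aut_topology d) W"
  unfolding aut_topology_eq
proof (rule openin_gen_nbhd)
  fix p assume pW: "p \<in> W"
  obtain A B where AB: "finite A" "finite B" "B \<subseteq> Qnn" "nb d p A B \<subseteq> W"
    using assms(2)[OF pW] by (elim exE conjE)
  have p: "p \<in> dc_aut d" using pW assms(1) by (rule subsetD[rotated])
  show "\<exists>V\<in>autB d. p \<in> V \<and> V \<subseteq> W"
  proof (rule bexI[where x="nb d p A B"])
    show "p \<in> nb d p A B \<and> nb d p A B \<subseteq> W" using nb_self[OF p] AB(4) by simp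
    show "nb d p A B \<in> autB d" by (rule nb_basis[OF p AB(1-3)])
  qed
qed

lemma nb_recenter: assumes "p \<in> nb d p0 A B" shows "nb d p A B = nb d p0 A B"
  using assms unfolding nb_def by auto

lemma nb_mono: "A \<subseteq> A' \<Longrightarrow> B \<subseteq> B' \<Longrightarrow> nb d p A' B' \<subseteq> nb d p A B"
  unfolding nb_def by auto

lemma aut_open_nbhd:
  assumes "openin (aut_topology d) W" "p \<in> W"
  shows "\<exists>A B. finite A \<and> finite B \<and> B \<subseteq> Qnn \<and> nb d p A B \<subseteq> W"
proof -
  have cl: "\<exists>V\<in>autB d. x \<in> V \<and> V \<subseteq> V1 \<inter> V2"
    if VV: "V1 \<in> autB d" "V2 \<in> autB d" "x \<in> V1" "x \<in> V2" for V1 V2 x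
  proof -
    obtain p1 A1 B1 where 1: "V1 = nb d p1 A1 B1" "finite A1" "finite B1" "B1 \<subseteq> Qnn"
      using autB_nb[OF VV(1)] by blast
    obtain p2 A2 B2 where 2: "V2 = nb d p2 A2 B2" "finite A2" "finite B2" "B2 \<subseteq> Qnn"
      using autB_nb[OF VV(2)] by blast
    have x: "x \<in> dc_aut d" using VV(3) 1(1) nb_sub by blast
    have "nb d x (A1 \<union> A2) (B1 \<union> B2) \<subseteq> nb d x A1 B1" "nb d x (A1 \<union> A2) (B1 \<union> B2) \<subseteq> nb d x A2 B2"
      by (rule nb_mono; simp)+
    moreover have "nb d x A1 B1 = V1" using nb_recenter[of x d p1 A1 B1] VV(3) 1(1) by simp
    moreover have "nb d x A2 B2 = V2" using nb_recenter[of x d p2 A2 B2] VV(4) 2(1) by simp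
    moreover have "nb d x (A1 \<union> A2) (B1 \<union> B2) \<in> autB d"
      using nb_basis[OF x] 1 2 by simp
    moreover have "x \<in> nb d x (A1 \<union> A2) (B1 \<union> B2)" using nb_self[OF x] .
    ultimately show ?thesis by blast
  qed
  obtain V where V: "V \<in> autB d" "p \<in> V" "V \<subseteq> W"
    using gen_basis_nbhd[OF cl assms(1)[unfolded aut_topology_eq]] assms(2) by blast
  obtain p0 A B where 0: "V = nb d p0 A B" "finite A" "finite B" "B \<subseteq> Qnn"
    using autB_nb[OF V(1)] by blast
  have "nb d p A B = V" using nb_recenter[of p d p0 A B] V(2) 0(1) by simp
  then show ?thesis using 0 V(3) by blast
qed

lemma continuous_into_autQ:
  assumes "\<And>x. x \<in> topspace X \<Longrightarrow> f x \<in> autQ"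
    and "\<And>D0 B. D0 \<in> autQ \<Longrightarrow> finite B \<Longrightarrow> B \<subseteq> Qnn \<Longrightarrow>
           openin X {x \<in> topspace X. \<forall>q\<in>B. f x q = D0 q}"
  shows "continuous_map X autQ_topology f"
  unfolding autQ_topology_def
proof (rule continuous_on_generated_topo)
  fix U assume "U \<in> {{D \<in> autQ. \<forall>q\<in>B. D q = D0 q} | D0 B. D0 \<in> autQ \<and> finite B \<and> B \<subseteq> Qnn}"
  then obtain D0 B where U: "U = {D \<in> autQ. \<forall>q\<in>B. D q = D0 q}" "D0 \<in> autQ" "finite B" "B \<subseteq> Qnn"
    by blast
  have "f -` U \<inter> topspace X = {x \<in> topspace X. \<forall>q\<in>B. f x q = D0 q}" using U(1) assms(1) by auto
  then show "openin X (f -` U \<inter> topspace X)" using assms(2)[OF U(2-4)] by simp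
next
  have "autQ \<subseteq> \<Union>{{D \<in> autQ. \<forall>q\<in>B. D q = D0 q} | D0 B. D0 \<in> autQ \<and> finite B \<and> B \<subseteq> Qnn}"
    using topspace_autQ unfolding autQ_topology_def by simp
  then show "f ` topspace X \<subseteq> \<Union>{{D \<in> autQ. \<forall>q\<in>B. D q = D0 q} | D0 B. D0 \<in> autQ \<and> finite B \<and> B \<subseteq> Qnn}"
    using assms(1) by blast
qed

lemma continuous_into_aut:
  assumes "\<And>x. x \<in> topspace X \<Longrightarrow> f x \<in> dc_aut d"
    and "\<And>p0 A B. p0 \<in> dc_aut d \<Longrightarrow> finite A \<Longrightarrow> finite B \<Longrightarrow> B \<subseteq> Qnn \<Longrightarrow>
           openin X {x \<in> topspace X. f x \<in> nb d p0 A B}"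
  shows "continuous_map X (aut_topology d) f"
  unfolding aut_topology_eq
proof (rule continuous_on_generated_topo)
  fix U assume "U \<in> autB d"
  then obtain p0 A B where U: "U = nb d p0 A B" "p0 \<in> dc_aut d" "finite A" "finite B" "B \<subseteq> Qnn"
    unfolding autB_def nb_def by blast
  have "f -` U \<inter> topspace X = {x \<in> topspace X. f x \<in> nb d p0 A B}" using U(1) by auto
  then show "openin X (f -` U \<inter> topspace X)" using assms(2)[OF U(2-5)] by simp
next
  show "f ` topspace X \<subseteq> \<Union>(autB d)"
    using assms(1) topspace_aut[of d] unfolding aut_topology_eq by auto
qed




section \<open>Part 1: the countable space\<close>

locale UU =
  fixes d :: "'a \<Rightarrow> 'a \<Rightarrow> rat"
  assumes ru: "rational_urysohn_ultrametric d"
begin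

lemma um: "ultrametric d" using ru unfolding rational_urysohn_ultrametric_def by simp
lemma cU: "countable (UNIV :: 'a set)" using ru unfolding rational_urysohn_ultrametric_def by simp
lemma ultU: "ultra_on UNIV d" using ultrametric_on[OF um] .
lemma uryU: "ury_on UNIV d"
  unfolding ury_on_def
proof (intro allI impI)
  fix A r assume H: "finite A \<and> A \<subseteq> (UNIV :: 'a set) \<and> (\<forall>a\<in>A. 0 < r a)
        \<and> (\<forall>a\<in>A. \<forall>b\<in>A. d a b \<le> max (r a) (r b) \<and> r a \<le> max (d a b) (r b))"
  have "\<exists>z. \<forall>a\<in>A. d z a = r a"
    using ru[unfolded rational_urysohn_ultrametric_def] H by blast
  then show "\<exists>z\<in>UNIV. \<forall>a\<in>A. d z a = r a" by simp
qed

lemma phi_ex: "\<exists>\<phi>. bij_betw \<phi> UNIV Mset \<and> (\<forall>x\<in>UNIV. \<forall>y\<in>UNIV. dM (\<phi> x) (\<phi> y) = d x y)"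
proof -
  have "\<exists>f. bij_betw f UNIV Mset \<and> (\<forall>x\<in>UNIV. \<forall>y\<in>UNIV. dM (f x) (f y) = d x y) \<and> (\<forall>a\<in>{}. f a = (\<lambda>_. (\<lambda>_. 0 :: nat)) a)"
    by (rule BF[OF cU countable_M ultU ultra_M uryU ury_M]) auto
  then show ?thesis by blast
qed

definition phi :: "'a \<Rightarrow> (rat \<Rightarrow> nat)" where
  "phi = (SOME \<phi>. bij_betw \<phi> UNIV Mset \<and> (\<forall>x\<in>UNIV. \<forall>y\<in>UNIV. dM (\<phi> x) (\<phi> y) = d x y))"

definition psi :: "(rat \<Rightarrow> nat) \<Rightarrow> 'a" where "psi = inv_into UNIV phi"

lemma phi_prop: "bij_betw phi UNIV Mset \<and> (\<forall>x\<in>UNIV. \<forall>y\<in>UNIV. dM (phi x) (phi y) = d x y)"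
  unfolding phi_def by (rule someI_ex[OF phi_ex])

lemma phi_bij: "bij_betw phi UNIV Mset" using phi_prop by simp
lemma phi_iso: "dM (phi x) (phi y) = d x y" using phi_prop by simp
lemma phi_M: "phi x \<in> Mset" using bij_betw_apply[OF phi_bij] by simp
lemma psi_phi: "psi (phi x) = x" unfolding psi_def using bij_betw_inv_into_left[OF phi_bij] by simp
lemma phi_psi: "y \<in> Mset \<Longrightarrow> phi (psi y) = y" unfolding psi_def using bij_betw_inv_into_right[OF phi_bij] by simp
lemma psi_bij: "bij_betw psi Mset UNIV" unfolding psi_def using bij_betw_inv_into[OF phi_bij] .
lemma psi_iso: assumes "y \<in> Mset" "y' \<in> Mset" shows "d (psi y) (psi y') = dM y y'"
  using phi_iso[of "psi y" "psi y'"] phi_psi[OF assms(1)] phi_psi[OF assms(2)] by simp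

definition sec :: "(rat \<Rightarrow> rat) \<Rightarrow> ('a \<Rightarrow> 'a) \<times> (rat \<Rightarrow> rat)" where
  "sec h = (psi \<circ> act h \<circ> phi, h)"

lemma sec_aut: assumes "h \<in> autQ" shows "sec h \<in> dc_aut d"
proof -
  have "bij_betw (psi \<circ> act h \<circ> phi) UNIV UNIV"
    using bij_betw_trans[OF bij_betw_trans[OF phi_bij act_bij[OF assms]] psi_bij] by (simp add: o_assoc)
  moreover have "d ((psi \<circ> act h \<circ> phi) x) ((psi \<circ> act h \<circ> phi) y) = h (d x y)" for x y
    using psi_iso[OF act_M[OF assms phi_M] act_M[OF assms phi_M]] act_dM[OF assms phi_M phi_M] phi_iso
    by simp
  ultimately show ?thesis unfolding sec_def using assms by (intro dc_autI) auto
qed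

lemma sec_hom: assumes "h \<in> autQ" "h' \<in> autQ" shows "sec (h \<circ> h') = dc_mult (sec h) (sec h')"
proof -
  have "(psi \<circ> act (h \<circ> h') \<circ> phi) x = ((psi \<circ> act h \<circ> phi) \<circ> (psi \<circ> act h' \<circ> phi)) x" for x
    using act_comp[OF assms] phi_psi[OF act_M[OF assms(2) phi_M]] by simp
  then show ?thesis unfolding sec_def dc_mult_def by auto
qed

lemma sec_snd: "snd (sec h) = h" unfolding sec_def by simp

lemma hom_sec: "hom_section d sec"
  by (unfold_locales) (auto simp: sec_aut sec_hom sec_snd)

lemma supp_Qnn: assumes "x \<in> Mset" shows "{q. x q \<noteq> 0} \<subseteq> Qnn"
proof
  fix q assume "q \<in> {q. x q \<noteq> 0}"
  then have "\<not> q \<le> 0" using Mset_D(2)[OF assms] by auto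
  then show "q \<in> Qnn" unfolding Qnn_def by simp
qed

lemma sec_local:
  assumes "h \<in> autQ" "finite A"
  shows "\<exists>B. finite B \<and> B \<subseteq> Qnn \<and> (\<forall>h'\<in>autQ. (\<forall>q\<in>B. h' q = h q) \<longrightarrow> (\<forall>a\<in>A. fst (sec h') a = fst (sec h) a))"
proof -
  define B where "B = (\<Union>a\<in>A. {q. phi a q \<noteq> 0})"
  have "finite B" unfolding B_def using assms(2) Mset_D(1)[OF phi_M] by blast
  moreover have "B \<subseteq> Qnn" unfolding B_def using supp_Qnn[OF phi_M] by blast
  moreover have "\<forall>a\<in>A. fst (sec h') a = fst (sec h) a" if "h' \<in> autQ" "\<forall>q\<in>B. h' q = h q" for h'
  proof
    fix a assume "a \<in> A"
    then have "\<forall>q\<in>{q. phi a q \<noteq> 0}. h' q = h q" using that(2) unfolding B_def by blast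
    then have "act h' (phi a) = act h (phi a)" using act_local[OF assms(1) that(1)] by blast
    then show "fst (sec h') a = fst (sec h) a" unfolding sec_def by simp
  qed
  ultimately show ?thesis by blast
qed


lemma osnd: "open_map (aut_topology d) autQ_topology snd"
  unfolding open_map_def
proof (intro allI impI)
  fix W assume W: "openin (aut_topology d) W"
  have Wsub: "W \<subseteq> dc_aut d" using openin_subset[OF W] topspace_aut[of d] by simp
  show "openin autQ_topology (snd ` W)"
  proof (rule autQ_openI)
    show "snd ` W \<subseteq> autQ" using Wsub dc_autD(2) by blast
    fix h assume "h \<in> snd ` W"
    then obtain p where p: "p \<in> W" "h = snd p" by blast
    have pa: "p \<in> dc_aut d" using p(1) Wsub by blast
    obtain A B where AB: "finite A" "finite B" "B \<subseteq> Qnn" "nb d p A B \<subseteq> W"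
      using aut_open_nbhd[OF W p(1)] by blast
    define B' where "B' = B \<union> (\<lambda>(a, b). d a b) ` (A \<times> A)"
    have "finite B'" unfolding B'_def using AB(1,2) by simp
    moreover have "B' \<subseteq> Qnn" unfolding B'_def Qnn_def using AB(3) ultrametricD(1)[OF um]
      by (auto simp: Qnn_def)
    moreover have "h' \<in> snd ` W" if h': "h' \<in> autQ" "\<forall>q\<in>B'. h' q = h q" for h'
    proof -
      have iso: "\<forall>a\<in>A. \<forall>b\<in>A. d (fst p a) (fst p b) = h' (d a b)"
      proof (intro ballI)
        fix a b assume "a \<in> A" "b \<in> A"
        then have "d a b \<in> B'" unfolding B'_def by force
        then show "d (fst p a) (fst p b) = h' (d a b)" using h'(2) dc_autD(3)[OF pa] p(2) by simp
      qed
      obtain f where f: "bij_betw f UNIV UNIV" "\<forall>x\<in>UNIV. \<forall>y\<in>UNIV. d (f x) (f y) = h' (d x y)"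
        "\<forall>a\<in>A. f a = fst p a"
        using BF_D[OF cU cU ultU ultU uryU uryU h'(1) AB(1) _ _ iso] by blast
      have fa: "(f, h') \<in> dc_aut d" using f(1,2) h'(1) by (intro dc_autI) auto
      have "(f, h') \<in> nb d p A B" unfolding nb_def using fa f(3) h'(2) p(2) unfolding B'_def by auto
      then have "(f, h') \<in> W" using AB(4) by blast
      then show ?thesis by (metis image_eqI snd_conv)
    qed
    ultimately show "\<exists>B. finite B \<and> B \<subseteq> Qnn \<and> (\<forall>h'\<in>autQ. (\<forall>q\<in>B. h' q = h q) \<longrightarrow> h' \<in> snd ` W)"
      by blast
  qed
qed

lemma cs: "continuous_map autQ_topology (aut_topology d) sec"
proof (rule continuous_into_aut)
  show "sec x \<in> dc_aut d" if "x \<in> topspace autQ_topology" for x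
    using that sec_aut topspace_autQ by simp
  fix p0 and A :: "'a set" and B assume p0: "p0 \<in> dc_aut d" "finite A" "finite B" "B \<subseteq> Qnn"
  show "openin autQ_topology {x \<in> topspace autQ_topology. sec x \<in> nb d p0 A B}"
  proof (rule autQ_openI)
    show "{x \<in> topspace autQ_topology. sec x \<in> nb d p0 A B} \<subseteq> autQ" using topspace_autQ by simp
    fix h assume "h \<in> {x \<in> topspace autQ_topology. sec x \<in> nb d p0 A B}"
    then have h: "h \<in> autQ" "sec h \<in> nb d p0 A B" using topspace_autQ by auto
    obtain Bs where Bs: "finite Bs" "Bs \<subseteq> Qnn"
      "\<forall>h'\<in>autQ. (\<forall>q\<in>Bs. h' q = h q) \<longrightarrow> (\<forall>a\<in>A. fst (sec h') a = fst (sec h) a)"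
      using sec_local[OF h(1) p0(2)] by blast
    have "h' \<in> {x \<in> topspace autQ_topology. sec x \<in> nb d p0 A B}"
      if h': "h' \<in> autQ" "\<forall>q\<in>B \<union> Bs. h' q = h q" for h'
    proof -
      have "\<forall>a\<in>A. fst (sec h') a = fst (sec h) a" using Bs(3) h' by simp
      then have "sec h' \<in> nb d p0 A B" using h(2) h' sec_aut[OF h'(1)] sec_snd[of h'] sec_snd[of h]
        unfolding nb_def by auto
      then show ?thesis using h'(1) topspace_autQ by simp
    qed
    then show "\<exists>B'. finite B' \<and> B' \<subseteq> Qnn \<and> (\<forall>h'\<in>autQ. (\<forall>q\<in>B'. h' q = h q) \<longrightarrow>
        h' \<in> {x \<in> topspace autQ_topology. sec x \<in> nb d p0 A B})"
      using Bs(1,2) p0(3,4) by (intro exI[where x="B \<union> Bs"]) auto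
  qed
qed

end

lemma csnd_aut: "continuous_map (aut_topology d) autQ_topology snd"
proof (rule continuous_into_autQ)
  show "snd x \<in> autQ" if "x \<in> topspace (aut_topology d)" for x
    using that topspace_aut[of d] dc_autD(2)[of x d] by auto
  fix D0 B assume D0: "D0 \<in> autQ" "finite B" "B \<subseteq> Qnn"
  show "openin (aut_topology d) {x \<in> topspace (aut_topology d). \<forall>q\<in>B. snd x q = D0 q}"
  proof (rule aut_openI)
    show "{x \<in> topspace (aut_topology d). \<forall>q\<in>B. snd x q = D0 q} \<subseteq> dc_aut d"
      using topspace_aut[of d] by auto
    fix p assume p: "p \<in> {x \<in> topspace (aut_topology d). \<forall>q\<in>B. snd x q = D0 q}"
    have "nb d p {} B \<subseteq> {x \<in> topspace (aut_topology d). \<forall>q\<in>B. snd x q = D0 q}"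
      using p topspace_aut[of d] unfolding nb_def by auto
    then show "\<exists>A B'. finite A \<and> finite B' \<and> B' \<subseteq> Qnn \<and> nb d p A B' \<subseteq> {x \<in> topspace (aut_topology d). \<forall>q\<in>B. snd x q = D0 q}"
      using D0 by blast
  qed
qed




context UU
begin

lemma cf: "continuous_map (prod_topology (subtopology (aut_topology d) (dc_iso d)) autQ_topology) (aut_topology d)
              (\<lambda>x. dc_mult (fst x) (sec (snd x)))"
proof (rule continuous_into_aut)
  have top: "topspace (prod_topology (subtopology (aut_topology d) (dc_iso d)) autQ_topology) = dc_iso d \<times> autQ"
    using topspace_aut[of d] topspace_autQ dc_iso_sub[of d] by auto
  show "dc_mult (fst x) (sec (snd x)) \<in> dc_aut d"
    if "x \<in> topspace (prod_topology (subtopology (aut_topology d) (dc_iso d)) autQ_topology)" for x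
  proof -
    have "fst x \<in> dc_aut d" "snd x \<in> autQ" using that top dc_iso_sub[of d] by (auto simp: mem_Times_iff)
    then show ?thesis using dc_mult_aut[of "fst x" d "sec (snd x)"] sec_aut by simp
  qed
  fix p0 and A :: "'a set" and B assume p0: "p0 \<in> dc_aut d" "finite A" "finite B" "B \<subseteq> Qnn"
  show "openin (prod_topology (subtopology (aut_topology d) (dc_iso d)) autQ_topology)
     {x \<in> topspace (prod_topology (subtopology (aut_topology d) (dc_iso d)) autQ_topology).
      dc_mult (fst x) (sec (snd x)) \<in> nb d p0 A B}"
    (is "openin ?X ?S")
    unfolding openin_prod_topology_alt
  proof (intro allI impI)
    fix n h assume nh: "(n, h) \<in> ?S"
    then have n: "n \<in> dc_iso d" and h: "h \<in> autQ" and fnh: "dc_mult n (sec h) \<in> nb d p0 A B"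
      using top by auto
    have na: "n \<in> dc_aut d" using n dc_iso_sub by blast
    have sn: "snd n = id" using n unfolding dc_iso_def by simp
    obtain Bs where Bs: "finite Bs" "Bs \<subseteq> Qnn"
      "\<forall>h'\<in>autQ. (\<forall>q\<in>Bs. h' q = h q) \<longrightarrow> (\<forall>a\<in>A. fst (sec h') a = fst (sec h) a)"
      using sec_local[OF h p0(2)] by blast
    define U where "U = nb d n (fst (sec h) ` A) {} \<inter> dc_iso d"
    define V where "V = {h' \<in> autQ. \<forall>q\<in>B \<union> Bs. h' q = h q}"
    have "openin (subtopology (aut_topology d) (dc_iso d)) U"
      unfolding U_def by (rule openin_subtopology_Int[OF nb_open[OF na]]) (use p0 in auto)
    moreover have "openin autQ_topology V" unfolding V_def
      by (rule autQ_open_basic[OF h]) (use Bs p0 in auto)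
    moreover have "n \<in> U" unfolding U_def using nb_self[OF na] n by simp
    moreover have "h \<in> V" unfolding V_def using h by simp
    moreover have "U \<times> V \<subseteq> ?S"
    proof
      fix x assume "x \<in> U \<times> V"
      then obtain n' h' where x: "x = (n', h')" "n' \<in> U" "h' \<in> V" by blast
      have n': "n' \<in> dc_iso d" "n' \<in> dc_aut d" "snd n' = id"
        using x(2) dc_iso_sub unfolding U_def dc_iso_def by auto
      have h': "h' \<in> autQ" "\<forall>q\<in>B \<union> Bs. h' q = h q" using x(3) unfolding V_def by auto
      have agree: "fst n' z = fst n z" if "z \<in> fst (sec h) ` A" for z
        using x(2) that unfolding U_def nb_def by auto
      have "dc_mult n' (sec h') \<in> nb d p0 A B"
        unfolding nb_def
      proof (intro CollectI conjI ballI)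
        show "dc_mult n' (sec h') \<in> dc_aut d" using dc_mult_aut[OF n'(2) sec_aut[OF h'(1)]] .
        fix a assume "a \<in> A"
        have "fst (sec h') a = fst (sec h) a" using Bs(3) h' \<open>a \<in> A\<close> by simp
        then have "fst (dc_mult n' (sec h')) a = fst (dc_mult n (sec h)) a"
          unfolding dc_mult_def using agree \<open>a \<in> A\<close> by simp
        also have "\<dots> = fst p0 a" using fnh \<open>a \<in> A\<close> unfolding nb_def by simp
        finally show "fst (dc_mult n' (sec h')) a = fst p0 a" .
      next
        fix q assume "q \<in> B"
        have "snd (dc_mult n' (sec h')) q = h q" unfolding dc_mult_def using n'(3) h'(2) \<open>q \<in> B\<close> sec_snd by simp
        also have "\<dots> = snd (dc_mult n (sec h)) q" unfolding dc_mult_def using sn sec_snd by simp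
        also have "\<dots> = snd p0 q" using fnh \<open>q \<in> B\<close> unfolding nb_def by simp
        finally show "snd (dc_mult n' (sec h')) q = snd p0 q" .
      qed
      then show "x \<in> ?S" using x(1) n'(1) h'(1) top by simp
    qed
    ultimately show "\<exists>U V. openin (subtopology (aut_topology d) (dc_iso d)) U \<and> openin autQ_topology V \<and>
              n \<in> U \<and> h \<in> V \<and> U \<times> V \<subseteq> ?S" by blast
  qed
qed

lemma cg: "continuous_map (aut_topology d) (aut_topology d) (\<lambda>p. dc_mult p (sec (inv (snd p))))"
proof (rule continuous_into_aut)
  show "dc_mult x (sec (inv (snd x))) \<in> dc_aut d" if "x \<in> topspace (aut_topology d)" for x
  proof -
    have x: "x \<in> dc_aut d" using that topspace_aut[of d] by simp
    show ?thesis using dc_mult_aut[OF x sec_aut[OF autQ_inv[OF dc_autD(2)[OF x]]]] .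
  qed
  fix p0 and A :: "'a set" and B assume p0: "p0 \<in> dc_aut d" "finite A" "finite B" "B \<subseteq> Qnn"
  show "openin (aut_topology d) {x \<in> topspace (aut_topology d). dc_mult x (sec (inv (snd x))) \<in> nb d p0 A B}"
    (is "openin _ ?S")
  proof (rule aut_openI)
    show "?S \<subseteq> dc_aut d" using topspace_aut[of d] by simp
    fix p assume "p \<in> ?S"
    then have p: "p \<in> dc_aut d" and gp: "dc_mult p (sec (inv (snd p))) \<in> nb d p0 A B"
      using topspace_aut[of d] by auto
    define D where "D = snd p"
    have D: "D \<in> autQ" using dc_autD(2)[OF p] unfolding D_def .
    have iD: "inv D \<in> autQ" using autQ_inv[OF D] .
    obtain Bs where Bs: "finite Bs" "Bs \<subseteq> Qnn"
      "\<forall>h'\<in>autQ. (\<forall>q\<in>Bs. h' q = inv D q) \<longrightarrow> (\<forall>a\<in>A. fst (sec h') a = fst (sec (inv D)) a)"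
      using sec_local[OF iD p0(2)] by blast
    define A' where "A' = fst (sec (inv D)) ` A"
    define B' where "B' = inv D ` Bs"
    have "finite A'" "finite B'" using p0(2) Bs(1) unfolding A'_def B'_def by auto
    moreover have "B' \<subseteq> Qnn" using Bs(2) autQ_nonneg[OF iD] unfolding B'_def Qnn_def by auto
    moreover have "nb d p A' B' \<subseteq> ?S"
    proof
      fix p' assume p'nb: "p' \<in> nb d p A' B'"
      have p': "p' \<in> dc_aut d" using p'nb nb_sub by blast
      define D' where "D' = snd p'"
      have D': "D' \<in> autQ" using dc_autD(2)[OF p'] unfolding D'_def .
      have "\<forall>q\<in>Bs. inv D' q = inv D q"
      proof
        fix q assume "q \<in> Bs"
        then have "D' (inv D q) = D (inv D q)" using p'nb unfolding nb_def B'_def D'_def D_def by auto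
        then have "D' (inv D q) = q" using autQ_f_inv[OF D] by simp
        then show "inv D' q = inv D q" using autQ_inv_f[OF D', of "inv D q"] by simp
      qed
      then have ag: "\<forall>a\<in>A. fst (sec (inv D')) a = fst (sec (inv D)) a"
        using Bs(3) autQ_inv[OF D'] by simp
      have "dc_mult p' (sec (inv D')) \<in> nb d p0 A B"
        unfolding nb_def
      proof (intro CollectI conjI ballI)
        show "dc_mult p' (sec (inv D')) \<in> dc_aut d" using dc_mult_aut[OF p' sec_aut[OF autQ_inv[OF D']]] .
        fix a assume "a \<in> A"
        have "fst (dc_mult p' (sec (inv D'))) a = fst p' (fst (sec (inv D)) a)"
          unfolding dc_mult_def using ag \<open>a \<in> A\<close> by simp
        also have "\<dots> = fst p (fst (sec (inv D)) a)" using p'nb \<open>a \<in> A\<close> unfolding nb_def A'_def by auto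
        also have "\<dots> = fst (dc_mult p (sec (inv (snd p)))) a" unfolding dc_mult_def D_def by simp
        also have "\<dots> = fst p0 a" using gp \<open>a \<in> A\<close> unfolding nb_def by simp
        finally show "fst (dc_mult p' (sec (inv D'))) a = fst p0 a" .
      next
        fix q assume "q \<in> B"
        have "snd (dc_mult p' (sec (inv D'))) q = q"
          unfolding dc_mult_def using sec_snd autQ_f_inv[OF D'] D'_def by simp
        also have "\<dots> = snd (dc_mult p (sec (inv (snd p)))) q"
          unfolding dc_mult_def using sec_snd autQ_f_inv[OF D] D_def by simp
        also have "\<dots> = snd p0 q" using gp \<open>q \<in> B\<close> unfolding nb_def by simp
        finally show "snd (dc_mult p' (sec (inv D'))) q = snd p0 q" .
      qed
      then show "p' \<in> ?S" using p' topspace_aut[of d] unfolding D'_def by simp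
    qed
    ultimately show "\<exists>A B. finite A \<and> finite B \<and> B \<subseteq> Qnn \<and> nb d p A B \<subseteq> ?S" by blast
  qed
qed

theorem part1: "projection_splits d (aut_topology d)"
  by (rule projection_splitsI[OF topspace_aut csnd_aut osnd hom_sec cs cf cg])

end




lemma small_N: fixes \<epsilon> :: rat assumes "0 < \<epsilon>" shows "\<exists>N. \<forall>n\<ge>N. inverse (of_nat (Suc n)) < \<epsilon>"
proof -
  obtain k :: nat where k: "0 < k" "inverse (of_nat k) < \<epsilon>" using ex_inverse_of_nat_less[OF assms] by blast
  have "inverse (of_nat (Suc n) :: rat) < \<epsilon>" if "k \<le> n" for n
  proof -
    have "(of_nat k :: rat) \<le> of_nat (Suc n)" using that by simp
    then have "inverse (of_nat (Suc n) :: rat) \<le> inverse (of_nat k)"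
      by (rule le_imp_inverse_le) (use k in simp)
    then show ?thesis using k(2) by simp
  qed
  then show ?thesis by blast
qed

locale UC = UU d for d :: "'a \<Rightarrow> 'a \<Rightarrow> rat" +
  fixes e :: "'b \<Rightarrow> 'b \<Rightarrow> rat" and j :: "'a \<Rightarrow> 'b"
  assumes comp: "is_completion d e j"
begin

lemma eum: "ultrametric e" using comp unfolding is_completion_def by simp
lemma ecomplete: "cauchy_seq_rat e x \<Longrightarrow> \<exists>y. converges_rat e x y"
  using comp unfolding is_completion_def by blast
lemma jiso: "e (j x) (j y) = d x y" using comp unfolding is_completion_def by blast
lemma dense: "0 < \<epsilon> \<Longrightarrow> \<exists>x. e (j x) y < \<epsilon>" using comp unfolding is_completion_def by blast

lemma esym: "e x y = e y x" using ultrametricD(3)[OF eum] .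

definition limp :: "('a \<Rightarrow> 'a) \<Rightarrow> 'b \<Rightarrow> 'b \<Rightarrow> bool" where
  "limp g y z \<longleftrightarrow> (\<forall>\<epsilon>>0. \<exists>\<delta>>0. \<forall>x. e (j x) y < \<delta> \<longrightarrow> e (j (g x)) z < \<epsilon>)"

definition ext :: "('a \<Rightarrow> 'a) \<Rightarrow> 'b \<Rightarrow> 'b" where
  "ext g y = (SOME z. limp g y z)"

lemma limp_unique: assumes "limp g y z" "limp g y z'" shows "z = z'"
proof -
  have "e z z' < \<epsilon>" if eps: "0 < \<epsilon>" for \<epsilon>
  proof -
    obtain \<delta>1 where d1: "\<delta>1 > 0" "\<forall>x. e (j x) y < \<delta>1 \<longrightarrow> e (j (g x)) z < \<epsilon>"
      using assms(1) eps unfolding limp_def by blast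
    obtain \<delta>2 where d2: "\<delta>2 > 0" "\<forall>x. e (j x) y < \<delta>2 \<longrightarrow> e (j (g x)) z' < \<epsilon>"
      using assms(2) eps unfolding limp_def by blast
    obtain x where x: "e (j x) y < min \<delta>1 \<delta>2" using dense[of "min \<delta>1 \<delta>2" y] d1(1) d2(1) by auto
    have "e (j (g x)) z < \<epsilon>" "e (j (g x)) z' < \<epsilon>" using x d1(2) d2(2) by auto
    then have "e z (j (g x)) < \<epsilon>" "e (j (g x)) z' < \<epsilon>" using esym by auto
    then show ?thesis using ultra_lt[OF eum] by blast
  qed
  then have "e z z' = 0" using rat_zero_if_small[OF ultrametricD(1)[OF eum]] by blast
  then show ?thesis using ultrametricD(2)[OF eum] by simp
qed

definition dmap :: "(rat \<Rightarrow> rat) \<Rightarrow> ('a \<Rightarrow> 'a) \<Rightarrow> bool" where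
  "dmap D g \<longleftrightarrow> D \<in> autQ \<and> (\<forall>x x'. d (g x) (g x') = D (d x x'))"

lemma dmapD: "dmap D g \<Longrightarrow> D \<in> autQ" "dmap D g \<Longrightarrow> d (g x) (g x') = D (d x x')"
  unfolding dmap_def by auto

lemma dmap_aut: assumes "p \<in> dc_aut d" shows "dmap (snd p) (fst p)"
  unfolding dmap_def using dc_autD(2,3)[OF assms] by simp

lemma limp_exists: assumes "dmap D g" shows "\<exists>z. limp g y z"
proof -
  have D: "D \<in> autQ" using dmapD(1)[OF assms] .
  have "\<forall>n. \<exists>x. e (j x) y < inverse (of_nat (Suc n))" using dense by simp
  then obtain xs where xs: "\<And>n. e (j (xs n)) y < inverse (of_nat (Suc n))" by metis
  have close: "D (e (j x) (j (xs n))) < \<epsilon>"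
    if "0 < \<epsilon>" "e (j x) y < inv D \<epsilon>" "inverse (of_nat (Suc n)) < inv D \<epsilon>" for x n \<epsilon>
  proof -
    have "e y (j (xs n)) < inv D \<epsilon>" using xs[of n] that(3) esym by (metis less_trans)
    then have "e (j x) (j (xs n)) < inv D \<epsilon>" using ultra_lt[OF eum that(2)] by blast
    then show ?thesis using autQ_small[OF D] by blast
  qed
  have "cauchy_seq_rat e (\<lambda>n. j (g (xs n)))"
    unfolding cauchy_seq_rat_def
  proof (intro allI impI)
    fix \<epsilon> :: rat assume "0 < \<epsilon>"
    obtain N where N: "\<forall>n\<ge>N. inverse (of_nat (Suc n)) < inv D \<epsilon>"
      using small_N[OF autQ_inv_pos[OF D \<open>0 < \<epsilon>\<close>]] by blast
    have "e (j (g (xs m))) (j (g (xs n))) < \<epsilon>" if "m \<ge> N" "n \<ge> N" for m n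
    proof -
      have "e (j (xs m)) y < inv D \<epsilon>" using xs[of m] N that(1) by (meson less_trans)
      then have "D (e (j (xs m)) (j (xs n))) < \<epsilon>" using close[OF \<open>0 < \<epsilon>\<close>] N that(2) by blast
      then show ?thesis using jiso dmapD(2)[OF assms] by simp
    qed
    then show "\<exists>N. \<forall>m\<ge>N. \<forall>n\<ge>N. e (j (g (xs m))) (j (g (xs n))) < \<epsilon>" by blast
  qed
  then obtain z where z: "converges_rat e (\<lambda>n. j (g (xs n))) z" using ecomplete by blast
  have "limp g y z"
    unfolding limp_def
  proof (intro allI impI)
    fix \<epsilon> :: rat assume "0 < \<epsilon>"
    obtain N1 where N1: "\<forall>n\<ge>N1. e (j (g (xs n))) z < \<epsilon>"
      using z \<open>0 < \<epsilon>\<close> unfolding converges_rat_def by blast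
    obtain N2 where N2: "\<forall>n\<ge>N2. inverse (of_nat (Suc n)) < inv D \<epsilon>"
      using small_N[OF autQ_inv_pos[OF D \<open>0 < \<epsilon>\<close>]] by blast
    have "e (j (g x)) z < \<epsilon>" if "e (j x) y < inv D \<epsilon>" for x
    proof -
      define n where "n = max N1 N2"
      have "D (e (j x) (j (xs n))) < \<epsilon>" using close[OF \<open>0 < \<epsilon>\<close> that] N2 unfolding n_def by simp
      then have "e (j (g x)) (j (g (xs n))) < \<epsilon>" using jiso dmapD(2)[OF assms] by simp
      moreover have "e (j (g (xs n))) z < \<epsilon>" using N1 unfolding n_def by simp
      ultimately show ?thesis using ultra_lt[OF eum] by blast
    qed
    then show "\<exists>\<delta>>0. \<forall>x. e (j x) y < \<delta> \<longrightarrow> e (j (g x)) z < \<epsilon>"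
      using autQ_inv_pos[OF D \<open>0 < \<epsilon>\<close>] by blast
  qed
  then show ?thesis by blast
qed

lemma ext_limp: "dmap D g \<Longrightarrow> limp g y (ext g y)"
  unfolding ext_def using limp_exists by (rule someI_ex) 

lemma ext_unique:
  assumes "dmap D g" "\<And>y y'. e (G y) (G y') = D (e y y')" "\<And>x. G (j x) = j (g x)"
  shows "G y = ext g y"
proof -
  have D: "D \<in> autQ" using dmapD(1)[OF assms(1)] .
  have "limp g y (G y)"
    unfolding limp_def
  proof (intro allI impI)
    fix \<epsilon> :: rat assume "0 < \<epsilon>"
    have "e (j (g x)) (G y) < \<epsilon>" if "e (j x) y < inv D \<epsilon>" for x
      using assms(2)[of "j x" y] assms(3)[of x] autQ_small[OF D that] by simp
    then show "\<exists>\<delta>>0. \<forall>x. e (j x) y < \<delta> \<longrightarrow> e (j (g x)) (G y) < \<epsilon>"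
      using autQ_inv_pos[OF D \<open>0 < \<epsilon>\<close>] by blast
  qed
  then show ?thesis using limp_unique ext_limp[OF assms(1)] by blast
qed

lemma ext_j: assumes "dmap D g" shows "ext g (j x) = j (g x)"
proof -
  have D: "D \<in> autQ" using dmapD(1)[OF assms] .
  have "limp g (j x) (j (g x))"
    unfolding limp_def
  proof (intro allI impI)
    fix \<epsilon> :: rat assume "0 < \<epsilon>"
    have "e (j (g x')) (j (g x)) < \<epsilon>" if "e (j x') (j x) < inv D \<epsilon>" for x'
      using autQ_small[OF D that] jiso dmapD(2)[OF assms] by simp
    then show "\<exists>\<delta>>0. \<forall>x'. e (j x') (j x) < \<delta> \<longrightarrow> e (j (g x')) (j (g x)) < \<epsilon>"
      using autQ_inv_pos[OF D \<open>0 < \<epsilon>\<close>] by blast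
  qed
  then show ?thesis using limp_unique ext_limp[OF assms] by blast
qed

lemma ext_iso: assumes "dmap D g" shows "e (ext g y) (ext g y') = D (e y y')"
proof (cases "y = y'")
  case True
  then show ?thesis using ultrametricD(5)[OF eum] autQ_zero[OF dmapD(1)[OF assms]] by simp
next
  case False
  have D: "D \<in> autQ" using dmapD(1)[OF assms] .
  define t where "t = e y y'"
  have tpos: "0 < t" using False ultrametricD(1,2)[OF eum, of y y'] unfolding t_def by auto
  define r where "r = D t"
  have rpos: "0 < r" using autQ_pos_iff[OF D] tpos unfolding r_def by simp
  obtain \<delta>1 where d1: "\<delta>1 > 0" "\<forall>x. e (j x) y < \<delta>1 \<longrightarrow> e (j (g x)) (ext g y) < r"
    using ext_limp[OF assms, of y] rpos unfolding limp_def by blast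
  obtain \<delta>2 where d2: "\<delta>2 > 0" "\<forall>x. e (j x) y' < \<delta>2 \<longrightarrow> e (j (g x)) (ext g y') < r"
    using ext_limp[OF assms, of y'] rpos unfolding limp_def by blast
  obtain x where x: "e (j x) y < min \<delta>1 t" using dense[of "min \<delta>1 t" y] d1(1) tpos by auto
  obtain x' where x': "e (j x') y' < min \<delta>2 t" using dense[of "min \<delta>2 t" y'] d2(1) tpos by auto
  have "e (j x) (j x') = e y y'"
    using ultra_stable[OF eum, of y "j x" t y' "j x'"] x x' esym unfolding t_def by simp
  then have gxx: "e (j (g x)) (j (g x')) = r" using jiso dmapD(2)[OF assms] unfolding r_def t_def by simp
  have "e (j (g x)) (ext g y) < r" "e (j (g x')) (ext g y') < r" using d1 d2 x x' by auto
  then have "e (ext g y) (ext g y') = e (j (g x)) (j (g x'))"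
    using ultra_stable[OF eum, of "j (g x)" "ext g y" r "j (g x')" "ext g y'"] gxx by simp
  then show ?thesis using gxx unfolding r_def t_def by simp
qed

lemma dmap_comp: "dmap D g \<Longrightarrow> dmap D' g' \<Longrightarrow> dmap (D \<circ> D') (g \<circ> g')"
  unfolding dmap_def using autQ_comp by auto

lemma ext_comp: assumes "dmap D g" "dmap D' g'" shows "ext (g \<circ> g') = ext g \<circ> ext g'"
proof
  fix y
  have "(ext g \<circ> ext g') y = ext (g \<circ> g') y"
  proof (rule ext_unique[OF dmap_comp[OF assms]])
    show "e ((ext g \<circ> ext g') y) ((ext g \<circ> ext g') y') = (D \<circ> D') (e y y')" for y y'
      using ext_iso[OF assms(1)] ext_iso[OF assms(2)] by simp
    show "(ext g \<circ> ext g') (j x) = j ((g \<circ> g') x)" for x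
      using ext_j[OF assms(1)] ext_j[OF assms(2)] by simp
  qed
  then show "ext (g \<circ> g') y = (ext g \<circ> ext g') y" by simp
qed

lemma dmap_id: "dmap id id" unfolding dmap_def using autQ_id by simp

lemma ext_id: "ext id = id"
proof
  fix y
  have "id y = ext id y" by (rule ext_unique[OF dmap_id]) auto
  then show "ext id y = id y" by simp
qed

lemma dmap_inv: assumes "dmap D g" "bij g" shows "dmap (inv D) (inv g)"
proof -
  have D: "D \<in> autQ" using dmapD(1)[OF assms(1)] .
  have "d (inv g x) (inv g x') = inv D (d x x')" for x x'
  proof -
    have "d x x' = D (d (inv g x) (inv g x'))"
      using dmapD(2)[OF assms(1), of "inv g x" "inv g x'"] bij_inv_eq_iff[OF assms(2)] by metis
    then show ?thesis using autQ_inv_f[OF D] by simp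
  qed
  then show ?thesis unfolding dmap_def using autQ_inv[OF D] by simp
qed

lemma ext_bij: assumes "dmap D g" "bij g" shows "bij (ext g)"
proof -
  have 1: "ext g \<circ> ext (inv g) = id"
    using ext_comp[OF assms(1) dmap_inv[OF assms]] ext_id bij_is_surj[OF assms(2)]
    by (simp add: surj_iff)
  have 2: "ext (inv g) \<circ> ext g = id"
    using ext_comp[OF dmap_inv[OF assms] assms(1)] ext_id bij_is_inj[OF assms(2)]
    by (simp add: inj_iff)
  show ?thesis using 2 1 by (rule o_bij)
qed

lemma ext_aut: assumes "p \<in> dc_aut d" shows "(ext (fst p), snd p) \<in> dc_aut e"
proof (rule dc_autI)
  show "bij (ext (fst p))" using ext_bij[OF dmap_aut[OF assms] dc_autD(1)[OF assms]] .
  show "snd p \<in> autQ" using dc_autD(2)[OF assms] .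
  show "e (ext (fst p) x) (ext (fst p) y) = snd p (e x y)" for x y using ext_iso[OF dmap_aut[OF assms]] .
qed

definition secM :: "(rat \<Rightarrow> rat) \<Rightarrow> ('b \<Rightarrow> 'b) \<times> (rat \<Rightarrow> rat)" where
  "secM h = (ext (fst (sec h)), h)"

lemma secM_aut: "h \<in> autQ \<Longrightarrow> secM h \<in> dc_aut e"
  using ext_aut[OF sec_aut] sec_snd unfolding secM_def by metis

lemma hom_secM: "hom_section e secM"
proof
  show "secM h \<in> dc_aut e" if "h \<in> autQ" for h using secM_aut[OF that] .
  show "snd (secM h) = h" for h unfolding secM_def by simp
  fix h h' assume h: "h \<in> autQ" "h' \<in> autQ"
  have "fst (sec (h \<circ> h')) = fst (sec h) \<circ> fst (sec h')" using sec_hom[OF h] unfolding dc_mult_def by simp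
  moreover have "ext (fst (sec h) \<circ> fst (sec h')) = ext (fst (sec h)) \<circ> ext (fst (sec h'))"
    using ext_comp[OF dmap_aut[OF sec_aut[OF h(1)]] dmap_aut[OF sec_aut[OF h(2)]]] .
  ultimately show "secM (h \<circ> h') = dc_mult (secM h) (secM h')"
    unfolding secM_def dc_mult_def by simp
qed

lemma secM_fst_j: "h \<in> autQ \<Longrightarrow> fst (secM h) (j x) = j (fst (sec h) x)"
  unfolding secM_def using ext_j[OF dmap_aut[OF sec_aut]] by simp

lemma secM_iso: assumes "h \<in> autQ" shows "e (fst (secM h) y) (fst (secM h) y') = h (e y y')"
  unfolding secM_def using ext_iso[OF dmap_aut[OF sec_aut[OF assms]], of y y'] sec_snd[of h] by simp

lemma secM_local:
  assumes "h \<in> autQ" "finite A" "0 < r"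
  shows "\<exists>B. finite B \<and> B \<subseteq> Qnn \<and> (\<forall>h'\<in>autQ. (\<forall>q\<in>B. h' q = h q) \<longrightarrow>
           (\<forall>a\<in>A. e (fst (secM h') a) (fst (secM h) a) < r))"
proof -
  define \<epsilon> where "\<epsilon> = inv h r"
  have \<epsilon>pos: "0 < \<epsilon>" unfolding \<epsilon>_def using autQ_inv_pos[OF assms(1,3)] .
  have "\<forall>a. \<exists>x. e (j x) a < \<epsilon>" using dense[OF \<epsilon>pos] by simp
  then obtain xa where xa: "\<And>a. e (j (xa a)) a < \<epsilon>" by metis
  obtain Bs where Bs0: "finite Bs \<and> Bs \<subseteq> Qnn \<and>
    (\<forall>h'\<in>autQ. (\<forall>q\<in>Bs. h' q = h q) \<longrightarrow> (\<forall>a\<in>xa ` A. fst (sec h') a = fst (sec h) a))"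
    using sec_local[OF assms(1) finite_imageI[OF assms(2)]] by (rule exE)
  note Bs = conjunct1[OF Bs0] conjunct1[OF conjunct2[OF Bs0]] conjunct2[OF conjunct2[OF Bs0]]
  have "\<forall>a\<in>A. e (fst (secM h') a) (fst (secM h) a) < r"
    if h': "h' \<in> autQ" "\<forall>q\<in>insert \<epsilon> Bs. h' q = h q" for h'
  proof
    fix a assume "a \<in> A"
    have he: "h' \<epsilon> = r" using h'(2) autQ_f_inv[OF assms(1)] unfolding \<epsilon>_def by simp
    have "e a (j (xa a)) < \<epsilon>" using xa[of a] esym[of a "j (xa a)"] by simp
    then have "h' (e a (j (xa a))) < h' \<epsilon>" using autQ_less_iff[OF h'(1)] by simp
    then have 1: "e (fst (secM h') a) (fst (secM h') (j (xa a))) < r"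
      using secM_iso[OF h'(1), of a "j (xa a)"] he by simp
    have "\<forall>q\<in>Bs. h' q = h q" using h'(2) by simp
    then have "\<forall>a\<in>xa ` A. fst (sec h') a = fst (sec h) a" using Bs(3) h'(1) by simp
    then have "fst (sec h') (xa a) = fst (sec h) (xa a)" using \<open>a \<in> A\<close> by simp
    then have 2: "fst (secM h') (j (xa a)) = fst (secM h) (j (xa a))"
      using secM_fst_j[OF h'(1)] secM_fst_j[OF assms(1)] by simp
    have "h (e (j (xa a)) a) < r" using autQ_small[OF assms(1)] xa[of a] unfolding \<epsilon>_def by simp
    then have 3: "e (fst (secM h) (j (xa a))) (fst (secM h) a) < r"
      using secM_iso[OF assms(1), of "j (xa a)" a] by simp
    show "e (fst (secM h') a) (fst (secM h) a) < r" using ultra_lt[OF eum 1] 2 3 by simp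
  qed
  moreover have "finite (insert \<epsilon> Bs)" using Bs(1) by simp
  moreover have "insert \<epsilon> Bs \<subseteq> Qnn" using Bs(2) \<epsilon>pos unfolding Qnn_def by auto
  ultimately show ?thesis by (intro exI[where x="insert \<epsilon> Bs"]) simp
qed

end




section \<open>The topology of Aut_M\<close>

definition autMB :: "('c \<Rightarrow> 'c \<Rightarrow> rat) \<Rightarrow> (('c \<Rightarrow> 'c) \<times> (rat \<Rightarrow> rat)) set set" where
  "autMB e = {{p \<in> dc_aut e. \<forall>x\<in>A. e (fst p x) (fst p0 x) < r}
       | p0 A r. p0 \<in> dc_aut e \<and> finite A \<and> 0 < r}"

definition mb :: "('c \<Rightarrow> 'c \<Rightarrow> rat) \<Rightarrow> ('c \<Rightarrow> 'c) \<times> (rat \<Rightarrow> rat) \<Rightarrow> 'c set \<Rightarrow> rat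
   \<Rightarrow> (('c \<Rightarrow> 'c) \<times> (rat \<Rightarrow> rat)) set" where
  "mb e p0 A r = {p \<in> dc_aut e. \<forall>x\<in>A. e (fst p x) (fst p0 x) < r}"

lemma autM_topology_eq: "autM_topology e = topology_generated_by (autMB e)"
  unfolding autM_topology_def autMB_def ..

lemma mb_basis: "p \<in> dc_aut e \<Longrightarrow> finite A \<Longrightarrow> 0 < r \<Longrightarrow> mb e p A r \<in> autMB e"
  unfolding mb_def autMB_def by blast

lemma autMB_mb: "V \<in> autMB e \<Longrightarrow> \<exists>p0 A r. V = mb e p0 A r \<and> p0 \<in> dc_aut e \<and> finite A \<and> 0 < r"
  unfolding mb_def autMB_def by blast

lemma mb_open: "p \<in> dc_aut e \<Longrightarrow> finite A \<Longrightarrow> 0 < r \<Longrightarrow> openin (autM_topology e) (mb e p A r)"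
  unfolding autM_topology_eq by (rule topology_generated_by_Basis[OF mb_basis])

lemma mb_self: "ultrametric e \<Longrightarrow> p \<in> dc_aut e \<Longrightarrow> 0 < r \<Longrightarrow> p \<in> mb e p A r"
  unfolding mb_def using ultrametricD(5) by fastforce

lemma mb_sub: "mb e p A r \<subseteq> dc_aut e" unfolding mb_def by auto

lemma mb_shift:
  assumes "ultrametric e" "p \<in> mb e p0 A r" "A \<subseteq> A'" "r' \<le> r"
  shows "mb e p A' r' \<subseteq> mb e p0 A r"
proof
  fix p' assume p': "p' \<in> mb e p A' r'"
  have "e (fst p' x) (fst p0 x) < r" if "x \<in> A" for x
  proof -
    have "e (fst p' x) (fst p x) < r" using p' that assms(3,4) unfolding mb_def by fastforce
    moreover have "e (fst p x) (fst p0 x) < r" using assms(2) that unfolding mb_def by simp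
    ultimately show ?thesis using ultra_lt[OF assms(1)] by blast
  qed
  then show "p' \<in> mb e p0 A r" using p' unfolding mb_def by simp
qed

lemma mb_mono: "A \<subseteq> A' \<Longrightarrow> r' \<le> r \<Longrightarrow> mb e p A' r' \<subseteq> mb e p A r"
  unfolding mb_def by fastforce

lemma topspace_autM: assumes "ultrametric e" shows "topspace (autM_topology e) = dc_aut e"
proof -
  have "\<Union>(autMB e) = dc_aut e"
  proof
    show "\<Union>(autMB e) \<subseteq> dc_aut e" unfolding autMB_def by auto
    show "dc_aut e \<subseteq> \<Union>(autMB e)"
    proof
      fix p assume "p \<in> dc_aut e"
      then have "p \<in> mb e p {} 1" "mb e p {} 1 \<in> autMB e"
        using mb_self[OF assms, of p 1 "{}"] mb_basis[of p e "{}" 1] by auto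
      then show "p \<in> \<Union>(autMB e)" by blast
    qed
  qed
  then show ?thesis unfolding autM_topology_eq by simp
qed

lemma autM_openI:
  assumes "ultrametric e" "W \<subseteq> dc_aut e"
    and "\<And>p. p \<in> W \<Longrightarrow> \<exists>A r. finite A \<and> 0 < r \<and> mb e p A r \<subseteq> W"
  shows "openin (autM_topology e) W"
  unfolding autM_topology_eq
proof (rule openin_gen_nbhd)
  fix p assume pW: "p \<in> W"
  obtain A r where Ar: "finite A" "0 < r" "mb e p A r \<subseteq> W"
    using assms(3)[OF pW] by (elim exE conjE)
  have p: "p \<in> dc_aut e" using pW assms(2) by (rule subsetD[rotated])
  show "\<exists>V\<in>autMB e. p \<in> V \<and> V \<subseteq> W"
  proof (rule bexI[where x="mb e p A r"])
    show "p \<in> mb e p A r \<and> mb e p A r \<subseteq> W" using mb_self[OF assms(1) p Ar(2)] Ar(3) by simp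
    show "mb e p A r \<in> autMB e" by (rule mb_basis[OF p Ar(1,2)])
  qed
qed

lemma autM_open_nbhd:
  assumes um: "ultrametric e" and W: "openin (autM_topology e) W" "p \<in> W"
  shows "\<exists>A r. finite A \<and> 0 < r \<and> mb e p A r \<subseteq> W"
proof -
  have cl: "\<exists>V\<in>autMB e. x \<in> V \<and> V \<subseteq> V1 \<inter> V2"
    if VV: "V1 \<in> autMB e" "V2 \<in> autMB e" "x \<in> V1" "x \<in> V2" for V1 V2 x
  proof -
    obtain p1 A1 r1 where 1: "V1 = mb e p1 A1 r1" "finite A1" "0 < r1"
      using autMB_mb[OF VV(1)] by blast
    obtain p2 A2 r2 where 2: "V2 = mb e p2 A2 r2" "finite A2" "0 < r2"
      using autMB_mb[OF VV(2)] by blast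
    have x: "x \<in> dc_aut e" using VV(3) 1(1) mb_sub by blast
    have "mb e x (A1 \<union> A2) (min r1 r2) \<subseteq> V1"
      using mb_shift[OF um, of x p1 A1 r1 "A1 \<union> A2" "min r1 r2"] VV(3) 1(1) by simp
    moreover have "mb e x (A1 \<union> A2) (min r1 r2) \<subseteq> V2"
      using mb_shift[OF um, of x p2 A2 r2 "A1 \<union> A2" "min r1 r2"] VV(4) 2(1) by simp
    moreover have "mb e x (A1 \<union> A2) (min r1 r2) \<in> autMB e"
      using mb_basis[OF x] 1 2 by simp
    moreover have "x \<in> mb e x (A1 \<union> A2) (min r1 r2)" using mb_self[OF um x] 1 2 by simp
    ultimately show ?thesis by blast
  qed
  obtain V where V: "V \<in> autMB e" "p \<in> V" "V \<subseteq> W"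
    using gen_basis_nbhd[OF cl W(1)[unfolded autM_topology_eq]] W(2) by blast
  obtain p0 A r where 0: "V = mb e p0 A r" "finite A" "0 < r"
    using autMB_mb[OF V(1)] by blast
  have "mb e p A r \<subseteq> V" using mb_shift[OF um, of p p0 A r A r] V(2) 0(1) by simp
  then show ?thesis using 0 V(3) by blast
qed

lemma continuous_into_autM:
  assumes "\<And>x. x \<in> topspace X \<Longrightarrow> f x \<in> dc_aut e"
    and "\<And>p0 A r. p0 \<in> dc_aut e \<Longrightarrow> finite A \<Longrightarrow> 0 < r \<Longrightarrow>
           openin X {x \<in> topspace X. f x \<in> mb e p0 A r}"
  shows "continuous_map X (autM_topology e) f"
  unfolding autM_topology_eq
proof (rule continuous_on_generated_topo)
  fix U assume "U \<in> autMB e"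
  then obtain p0 A r where U: "U = mb e p0 A r" "p0 \<in> dc_aut e" "finite A" "0 < r"
    unfolding autMB_def mb_def by blast
  have "f -` U \<inter> topspace X = {x \<in> topspace X. f x \<in> mb e p0 A r}" using U(1) by auto
  then show "openin X (f -` U \<inter> topspace X)" using assms(2)[OF U(2-4)] by simp
next
  have "dc_aut e \<subseteq> \<Union>(autMB e)"
  proof
    fix p assume "p \<in> dc_aut e"
    have 1: "mb e p {} 1 \<in> autMB e" using mb_basis[of p e "{}" 1] \<open>p \<in> dc_aut e\<close> by simp
    have 2: "p \<in> mb e p {} 1" unfolding mb_def using \<open>p \<in> dc_aut e\<close> by simp
    show "p \<in> \<Union>(autMB e)" using 1 2 by blast
  qed
  then show "f ` topspace X \<subseteq> \<Union>(autMB e)" using assms(1) by blast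
qed

context UC
begin

lemma pts: assumes "0 < q" shows "\<exists>u v. e u v = q"
proof -
  obtain x0 :: 'a where True by blast
  have "\<exists>z\<in>UNIV. \<forall>a\<in>{x0}. d z a = (\<lambda>_. q) a"
    using uryU[unfolded ury_on_def, rule_format, of "{x0}" "\<lambda>_. q"] assms
      ultrametricD(5)[OF um, of x0] by simp
  then obtain z where "d z x0 = q" by blast
  then have "e (j z) (j x0) = q" using jiso by simp
  then show ?thesis by blast
qed

lemma csndM: "continuous_map (autM_topology e) autQ_topology snd"
proof (rule continuous_into_autQ)
  show "snd x \<in> autQ" if "x \<in> topspace (autM_topology e)" for x
    using that topspace_autM[OF eum] dc_autD(2)[of x e] by auto
  fix D0 B assume D0: "D0 \<in> autQ" "finite B" "B \<subseteq> Qnn"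
  show "openin (autM_topology e) {x \<in> topspace (autM_topology e). \<forall>q\<in>B. snd x q = D0 q}"
    (is "openin _ ?S")
  proof (rule autM_openI[OF eum])
    show "?S \<subseteq> dc_aut e" using topspace_autM[OF eum] by simp
    fix p assume pS: "p \<in> ?S"
    have p: "p \<in> dc_aut e" and pB: "\<forall>q\<in>B. snd p q = D0 q" using pS topspace_autM[OF eum] by auto
    have D: "snd p \<in> autQ" using dc_autD(2)[OF p] .
    have "\<forall>q. \<exists>uv. 0 < q \<longrightarrow> e (fst uv) (snd uv) = q" using pts by fastforce
    then obtain uv where uv: "\<And>q. 0 < q \<Longrightarrow> e (fst (uv q)) (snd (uv q)) = q" by metis
    define Bp where "Bp = {q\<in>B. 0 < q}"
    define A where "A = (fst \<circ> uv) ` Bp \<union> (snd \<circ> uv) ` Bp"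
    define r where "r = Min (insert 1 (snd p ` Bp))"
    have fBp: "finite Bp" using D0(2) unfolding Bp_def by simp
    have fA: "finite A" using fBp unfolding A_def by simp
    have rpos: "0 < r"
    proof -
      have "\<forall>t\<in>insert 1 (snd p ` Bp). 0 < t" using autQ_pos_iff[OF D] unfolding Bp_def by auto
      then show ?thesis unfolding r_def using fBp by (simp add: Min_gr_iff)
    qed
    have rle: "r \<le> snd p q" if "q \<in> Bp" for q
      unfolding r_def using fBp that by (simp add: Min_le_iff)
    have "mb e p A r \<subseteq> ?S"
    proof
      fix p' assume p'mb: "p' \<in> mb e p A r"
      have p': "p' \<in> dc_aut e" using p'mb mb_sub by blast
      have D': "snd p' \<in> autQ" using dc_autD(2)[OF p'] .
      have "snd p' q = D0 q" if "q \<in> B" for q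
      proof (cases "0 < q")
        case False
        then have "q = 0" using that D0(3) unfolding Qnn_def by force
        then show ?thesis using pB that autQ_zero[OF D] autQ_zero[OF D'] by simp
      next
        case True
        then have qB: "q \<in> Bp" unfolding Bp_def using that by simp
        define u v where "u = fst (uv q)" and "v = snd (uv q)"
        have uvq: "e u v = q" unfolding u_def v_def using uv[OF True] .
        have "u \<in> A" "v \<in> A" unfolding A_def u_def v_def using qB by auto
        then have "e (fst p' u) (fst p u) < r" "e (fst p' v) (fst p v) < r"
          using p'mb unfolding mb_def by auto
        then have "e (fst p u) (fst p' u) < r" "e (fst p v) (fst p' v) < r" using esym by auto
        moreover have "r \<le> e (fst p u) (fst p v)" using rle[OF qB] dc_autD(3)[OF p, of u v] uvq by simp
        ultimately have "e (fst p' u) (fst p' v) = e (fst p u) (fst p v)"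
          using ultra_stable[OF eum] by blast
        then have "snd p' q = snd p q" using dc_autD(3)[OF p, of u v] dc_autD(3)[OF p', of u v] uvq by simp
        then show ?thesis using pB that by simp
      qed
      then show "p' \<in> ?S" using p' topspace_autM[OF eum] by simp
    qed
    then show "\<exists>A r. finite A \<and> 0 < r \<and> mb e p A r \<subseteq> ?S" using fA rpos by blast
  qed
qed

lemma csM: "continuous_map autQ_topology (autM_topology e) secM"
proof (rule continuous_into_autM)
  show "secM x \<in> dc_aut e" if "x \<in> topspace autQ_topology" for x
    using that secM_aut topspace_autQ by simp
  fix p0 and A :: "'b set" and r :: rat assume p0: "p0 \<in> dc_aut e" "finite A" "0 < r"
  show "openin autQ_topology {x \<in> topspace autQ_topology. secM x \<in> mb e p0 A r}"
    (is "openin _ ?S")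
  proof (rule autQ_openI)
    show "?S \<subseteq> autQ" using topspace_autQ by simp
    fix h assume "h \<in> ?S"
    then have h: "h \<in> autQ" "secM h \<in> mb e p0 A r" using topspace_autQ by auto
    obtain B where B0: "finite B \<and> B \<subseteq> Qnn \<and> (\<forall>h'\<in>autQ. (\<forall>q\<in>B. h' q = h q) \<longrightarrow>
           (\<forall>a\<in>A. e (fst (secM h') a) (fst (secM h) a) < r))"
      using secM_local[OF h(1) p0(2,3)] by (rule exE)
    note B = conjunct1[OF B0] conjunct1[OF conjunct2[OF B0]] conjunct2[OF conjunct2[OF B0]]
    have "h' \<in> ?S" if h': "h' \<in> autQ" "\<forall>q\<in>B. h' q = h q" for h'
    proof -
      have 1: "\<forall>a\<in>A. e (fst (secM h') a) (fst (secM h) a) < r" using B(3) h' by blast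
      have "secM h' \<in> mb e p0 A r"
        unfolding mb_def
      proof (intro CollectI conjI ballI)
        show "secM h' \<in> dc_aut e" using secM_aut[OF h'(1)] .
        fix a assume "a \<in> A"
        have "e (fst (secM h) a) (fst p0 a) < r" using h(2) \<open>a \<in> A\<close> unfolding mb_def by simp
        then show "e (fst (secM h') a) (fst p0 a) < r" using ultra_lt[OF eum] 1 \<open>a \<in> A\<close> by blast
      qed
      then show ?thesis using h'(1) topspace_autQ by simp
    qed
    then show "\<exists>B. finite B \<and> B \<subseteq> Qnn \<and> (\<forall>h'\<in>autQ. (\<forall>q\<in>B. h' q = h q) \<longrightarrow> h' \<in> ?S)"
      using B(1,2) by blast
  qed
qed

end




context UC
begin

lemma osndM: "open_map (autM_topology e) autQ_topology snd"
  unfolding open_map_def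
proof (intro allI impI)
  fix W assume W: "openin (autM_topology e) W"
  have Wsub: "W \<subseteq> dc_aut e" using openin_subset[OF W] topspace_autM[OF eum] by simp
  show "openin autQ_topology (snd ` W)"
  proof (rule autQ_openI)
    show "snd ` W \<subseteq> autQ"
    proof
      fix D assume "D \<in> snd ` W"
      then obtain p where "p \<in> W" "D = snd p" by blast
      then show "D \<in> autQ" using dc_autD(2)[of p e] Wsub by blast
    qed
    fix h assume "h \<in> snd ` W"
    then obtain p where p: "p \<in> W" "h = snd p" by blast
    have pa: "p \<in> dc_aut e" using p(1) Wsub by blast
    have D: "h \<in> autQ" using dc_autD(2)[OF pa] p(2) by simp
    obtain A r where Ar0: "finite A \<and> 0 < r \<and> mb e p A r \<subseteq> W"
      using autM_open_nbhd[OF eum W p(1)] by (elim exE) (rule that)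
    have fA: "finite A" and rpos: "0 < r" and AW: "mb e p A r \<subseteq> W" using Ar0 by auto
    define g where "g = fst p"
    have giso: "e (g y) (g y') = h (e y y')" for y y' unfolding g_def using dc_autD(3)[OF pa] p(2) by simp
    define \<epsilon> where "\<epsilon> = inv h r"
    have \<epsilon>pos: "0 < \<epsilon>" unfolding \<epsilon>_def using autQ_inv_pos[OF D rpos] .
    have "\<forall>a. \<exists>x. e (j x) a < \<epsilon>" using dense[OF \<epsilon>pos] by simp
    then obtain xa where xa: "\<And>a. e (j (xa a)) a < \<epsilon>" by metis
    define X0 where "X0 = xa ` A"
    have fX0: "finite X0" unfolding X0_def using fA by simp
    define \<Delta> where "\<Delta> = (\<lambda>(x, x'). h (d x x')) ` {xx \<in> X0 \<times> X0. fst xx \<noteq> snd xx}"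
    have f\<Delta>: "finite \<Delta>" unfolding \<Delta>_def using fX0 by simp
    define \<delta> where "\<delta> = Min (insert r \<Delta>)"
    have \<Delta>pos: "\<forall>t\<in>\<Delta>. 0 < t"
    proof
      fix t assume "t \<in> \<Delta>"
      then obtain x x' where xx: "x \<noteq> x'" "t = h (d x x')" unfolding \<Delta>_def by auto
      have "0 < d x x'" using xx(1) ultrametricD(1,2)[OF um, of x x'] by auto
      then show "0 < t" using xx(2) autQ_pos_iff[OF D] by simp
    qed
    have \<delta>pos: "0 < \<delta>" unfolding \<delta>_def using f\<Delta> \<Delta>pos rpos by (simp add: Min_gr_iff)
    have \<delta>r: "\<delta> \<le> r" unfolding \<delta>_def using f\<Delta> by simp
    have \<delta>le: "\<delta> \<le> h (d x x')" if "x \<in> X0" "x' \<in> X0" "x \<noteq> x'" for x x'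
    proof -
      have "h (d x x') \<in> \<Delta>" unfolding \<Delta>_def using that by force
      then show ?thesis unfolding \<delta>_def using f\<Delta> by simp
    qed
    have "\<forall>x. \<exists>y. e (j y) (g (j x)) < \<delta>" using dense[OF \<delta>pos] by simp
    then obtain ya where ya: "\<And>x. e (j (ya x)) (g (j x)) < \<delta>" by metis
    have yiso: "d (ya x) (ya x') = h (d x x')" if "x \<in> X0" "x' \<in> X0" for x x'
    proof (cases "x = x'")
      case True
      then show ?thesis using ultrametricD(5)[OF um] autQ_zero[OF D] by simp
    next
      case False
      have 1: "\<delta> \<le> e (g (j x)) (g (j x'))" using \<delta>le[OF that False] giso jiso by simp
      have "e (g (j x)) (j (ya x)) < \<delta>" "e (g (j x')) (j (ya x')) < \<delta>" using ya esym by metis+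
      then have "e (j (ya x)) (j (ya x')) = e (g (j x)) (g (j x'))"
        using ultra_stable[OF eum _ _ 1] by blast
      then show ?thesis using giso jiso by simp
    qed
    define B where "B = insert \<epsilon> ((\<lambda>(x, x'). d x x') ` (X0 \<times> X0))"
    have fB: "finite B" unfolding B_def using fX0 by simp
    have BQ: "B \<subseteq> Qnn" unfolding B_def Qnn_def using \<epsilon>pos ultrametricD(1)[OF um] by auto
    have "h' \<in> snd ` W" if h': "h' \<in> autQ" "\<forall>q\<in>B. h' q = h q" for h'
    proof -
      have iso': "\<forall>x\<in>X0. \<forall>x'\<in>X0. d (ya x) (ya x') = h' (d x x')"
      proof (intro ballI)
        fix x x' assume xx: "x \<in> X0" "x' \<in> X0"
        then have "d x x' \<in> B" unfolding B_def by force
        then show "d (ya x) (ya x') = h' (d x x')" using yiso[OF xx] h'(2) by simp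
      qed
      obtain f where f0: "bij_betw f UNIV UNIV \<and> (\<forall>x\<in>UNIV. \<forall>y\<in>UNIV. d (f x) (f y) = h' (d x y))
          \<and> (\<forall>a\<in>X0. f a = ya a)"
        using BF_D[OF cU cU ultU ultU uryU uryU h'(1) fX0 subset_UNIV subset_UNIV iso'] by (rule exE)
      have fb: "bij f" and fi: "\<And>x y. d (f x) (f y) = h' (d x y)" and fy: "\<And>a. a \<in> X0 \<Longrightarrow> f a = ya a"
        using f0 by (auto simp: bij_def bij_betw_def)
      have fa: "(f, h') \<in> dc_aut d" using fb h'(1) fi by (rule dc_autI)
      have dm: "dmap h' f" using dmap_aut[OF fa] by simp
      define G where "G = ext f"
      have GA: "(G, h') \<in> dc_aut e" using ext_aut[OF fa] unfolding G_def by simp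
      have he: "h' \<epsilon> = r" using h'(2) autQ_f_inv[OF D] unfolding B_def \<epsilon>_def by simp
      have "(G, h') \<in> mb e p A r"
        unfolding mb_def
      proof (intro CollectI conjI ballI)
        show "(G, h') \<in> dc_aut e" using GA by simp
        fix a assume "a \<in> A"
        have "e a (j (xa a)) < \<epsilon>" using xa[of a] esym[of a "j (xa a)"] by simp
        then have "h' (e a (j (xa a))) < h' \<epsilon>" using autQ_less_iff[OF h'(1)] by simp
        then have 1: "e (G a) (G (j (xa a))) < r" using ext_iso[OF dm] he unfolding G_def by simp
        have "xa a \<in> X0" unfolding X0_def using \<open>a \<in> A\<close> by simp
        then have 2: "G (j (xa a)) = j (ya (xa a))" using ext_j[OF dm] fy unfolding G_def by simp
        have 3: "e (j (ya (xa a))) (g (j (xa a))) < r" using ya[of "xa a"] \<delta>r by simp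
        have "h (e (j (xa a)) a) < r" using autQ_small[OF D] xa[of a] unfolding \<epsilon>_def by simp
        then have 4: "e (g (j (xa a))) (g a) < r" using giso by simp
        have "e (G a) (g a) < r" using ultra_lt3[OF eum 1 _ 4] 2 3 by simp
        then show "e (fst (G, h') a) (fst p a) < r" unfolding g_def by simp
      qed
      then have "(G, h') \<in> W" using AW by blast
      then show ?thesis by (metis image_eqI snd_conv)
    qed
    then show "\<exists>B. finite B \<and> B \<subseteq> Qnn \<and> (\<forall>h'\<in>autQ. (\<forall>q\<in>B. h' q = h q) \<longrightarrow> h' \<in> snd ` W)"
      using fB BQ by blast
  qed
qed


lemma cfM: "continuous_map (prod_topology (subtopology (autM_topology e) (dc_iso e)) autQ_topology) (autM_topology e)
              (\<lambda>x. dc_mult (fst x) (secM (snd x)))"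
proof (rule continuous_into_autM)
  have top: "topspace (prod_topology (subtopology (autM_topology e) (dc_iso e)) autQ_topology) = dc_iso e \<times> autQ"
    using topspace_autM[OF eum] topspace_autQ dc_iso_sub[of e] by auto
  show "dc_mult (fst x) (secM (snd x)) \<in> dc_aut e"
    if "x \<in> topspace (prod_topology (subtopology (autM_topology e) (dc_iso e)) autQ_topology)" for x
  proof -
    have "fst x \<in> dc_aut e" "snd x \<in> autQ" using that top dc_iso_sub[of e] by (auto simp: mem_Times_iff)
    then show ?thesis using dc_mult_aut[of "fst x" e "secM (snd x)"] secM_aut by simp
  qed
  fix p0 and A :: "'b set" and r :: rat assume p0: "p0 \<in> dc_aut e" "finite A" "0 < r"
  show "openin (prod_topology (subtopology (autM_topology e) (dc_iso e)) autQ_topology)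
     {x \<in> topspace (prod_topology (subtopology (autM_topology e) (dc_iso e)) autQ_topology).
      dc_mult (fst x) (secM (snd x)) \<in> mb e p0 A r}"
    (is "openin ?X ?S")
    unfolding openin_prod_topology_alt
  proof (intro allI impI)
    fix n h assume nh: "(n, h) \<in> ?S"
    then have n: "n \<in> dc_iso e" and h: "h \<in> autQ" and fnh: "dc_mult n (secM h) \<in> mb e p0 A r"
      using top by auto
    have na: "n \<in> dc_aut e" using n dc_iso_sub by blast
    have sn: "snd n = id" using n unfolding dc_iso_def by simp
    obtain B where B0: "finite B \<and> B \<subseteq> Qnn \<and> (\<forall>h'\<in>autQ. (\<forall>q\<in>B. h' q = h q) \<longrightarrow>
           (\<forall>a\<in>A. e (fst (secM h') a) (fst (secM h) a) < r))"
      using secM_local[OF h p0(2,3)] by (rule exE)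
    note B = conjunct1[OF B0] conjunct1[OF conjunct2[OF B0]] conjunct2[OF conjunct2[OF B0]]
    define U where "U = mb e n (fst (secM h) ` A) r \<inter> dc_iso e"
    define V where "V = {h' \<in> autQ. \<forall>q\<in>B. h' q = h q}"
    have "openin (subtopology (autM_topology e) (dc_iso e)) U"
      unfolding U_def by (rule openin_subtopology_Int[OF mb_open[OF na]]) (use p0 in auto)
    moreover have "openin autQ_topology V" unfolding V_def by (rule autQ_open_basic[OF h B(1,2)])
    moreover have "n \<in> U" unfolding U_def using mb_self[OF eum na p0(3)] n by simp
    moreover have "h \<in> V" unfolding V_def using h by simp
    moreover have "U \<times> V \<subseteq> ?S"
    proof
      fix x assume "x \<in> U \<times> V"
      then obtain n' h' where x: "x = (n', h')" "n' \<in> U" "h' \<in> V" by blast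
      have n': "n' \<in> dc_iso e" "n' \<in> dc_aut e" "snd n' = id"
        using x(2) dc_iso_sub unfolding U_def dc_iso_def by auto
      have h': "h' \<in> autQ" "\<forall>q\<in>B. h' q = h q" using x(3) unfolding V_def by auto
      have "dc_mult n' (secM h') \<in> mb e p0 A r"
        unfolding mb_def
      proof (intro CollectI conjI ballI)
        show "dc_mult n' (secM h') \<in> dc_aut e" using dc_mult_aut[OF n'(2) secM_aut[OF h'(1)]] .
        fix a assume "a \<in> A"
        define z z' where "z = fst (secM h) a" and "z' = fst (secM h') a"
        have "e z' z < r" using B(3) h' \<open>a \<in> A\<close> unfolding z_def z'_def by blast
        then have 1: "e (fst n' z') (fst n' z) < r" using dc_autD(3)[OF n'(2), of z' z] n'(3) by simp
        have "z \<in> fst (secM h) ` A" unfolding z_def using \<open>a \<in> A\<close> by simp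
        then have 2: "e (fst n' z) (fst n z) < r" using x(2) unfolding U_def mb_def by auto
        have 3: "e (fst n z) (fst p0 a) < r" using fnh \<open>a \<in> A\<close> unfolding mb_def dc_mult_def z_def by simp
        show "e (fst (dc_mult n' (secM h')) a) (fst p0 a) < r"
          using ultra_lt3[OF eum 1 2 3] unfolding dc_mult_def z'_def by simp
      qed
      then show "x \<in> ?S" using x(1) n'(1) h'(1) top by simp
    qed
    ultimately show "\<exists>U V. openin (subtopology (autM_topology e) (dc_iso e)) U \<and> openin autQ_topology V \<and>
              n \<in> U \<and> h \<in> V \<and> U \<times> V \<subseteq> ?S" by blast
  qed
qed

lemma cgM: "continuous_map (autM_topology e) (autM_topology e) (\<lambda>p. dc_mult p (secM (inv (snd p))))"
proof (rule continuous_into_autM)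
  show "dc_mult x (secM (inv (snd x))) \<in> dc_aut e" if "x \<in> topspace (autM_topology e)" for x
  proof -
    have x: "x \<in> dc_aut e" using that topspace_autM[OF eum] by simp
    show ?thesis using dc_mult_aut[OF x secM_aut[OF autQ_inv[OF dc_autD(2)[OF x]]]] .
  qed
  fix p0 and A :: "'b set" and r :: rat assume p0: "p0 \<in> dc_aut e" "finite A" "0 < r"
  show "openin (autM_topology e) {x \<in> topspace (autM_topology e). dc_mult x (secM (inv (snd x))) \<in> mb e p0 A r}"
    (is "openin _ ?S")
  proof (rule autM_openI[OF eum])
    show "?S \<subseteq> dc_aut e" using topspace_autM[OF eum] by simp
    fix p assume "p \<in> ?S"
    then have p: "p \<in> dc_aut e" and gp: "dc_mult p (secM (inv (snd p))) \<in> mb e p0 A r"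
      using topspace_autM[OF eum] by auto
    define D where "D = snd p"
    have D: "D \<in> autQ" using dc_autD(2)[OF p] unfolding D_def .
    have iD: "inv D \<in> autQ" using autQ_inv[OF D] .
    define \<epsilon> where "\<epsilon> = inv D r"
    have \<epsilon>pos: "0 < \<epsilon>" unfolding \<epsilon>_def using autQ_inv_pos[OF D p0(3)] .
    obtain Bs where B0: "finite Bs \<and> Bs \<subseteq> Qnn \<and> (\<forall>h'\<in>autQ. (\<forall>q\<in>Bs. h' q = inv D q) \<longrightarrow>
           (\<forall>a\<in>A. e (fst (secM h') a) (fst (secM (inv D)) a) < \<epsilon>))"
      using secM_local[OF iD p0(2) \<epsilon>pos] by (rule exE)
    note Bs = conjunct1[OF B0] conjunct1[OF conjunct2[OF B0]] conjunct2[OF conjunct2[OF B0]]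
    define Z where "Z = fst (secM (inv D)) ` A"
    define C where "C = insert \<epsilon> (inv D ` Bs)"
    have fC: "finite C" unfolding C_def using Bs(1) by simp
    have CQ: "C \<subseteq> Qnn" unfolding C_def using Bs(2) autQ_nonneg[OF iD] \<epsilon>pos unfolding Qnn_def by auto
    have op2: "openin (autM_topology e) {x \<in> topspace (autM_topology e). snd x \<in> {D' \<in> autQ. \<forall>q\<in>C. D' q = D q}}"
      by (rule openin_continuous_map_preimage[OF csndM autQ_open_basic[OF D fC CQ]])
    have pmem: "p \<in> {x \<in> topspace (autM_topology e). snd x \<in> {D' \<in> autQ. \<forall>q\<in>C. D' q = D q}}"
      using p D topspace_autM[OF eum] unfolding D_def by simp
    obtain A2 r2 where A20: "finite A2 \<and> 0 < r2 \<and>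
        mb e p A2 r2 \<subseteq> {x \<in> topspace (autM_topology e). snd x \<in> {D' \<in> autQ. \<forall>q\<in>C. D' q = D q}}"
      using autM_open_nbhd[OF eum op2 pmem] by (elim exE) (rule that)
    have fA2: "finite A2" and r2: "0 < r2"
      and A2: "mb e p A2 r2 \<subseteq> {x \<in> topspace (autM_topology e). snd x \<in> {D' \<in> autQ. \<forall>q\<in>C. D' q = D q}}"
      using A20 by auto
    have "mb e p (Z \<union> A2) (min r r2) \<subseteq> ?S"
    proof
      fix p' assume p'mb: "p' \<in> mb e p (Z \<union> A2) (min r r2)"
      have p'Z: "p' \<in> mb e p Z r" using mb_mono[of Z "Z \<union> A2" "min r r2" r e p] p'mb by auto
      have p'A2: "p' \<in> mb e p A2 r2" using mb_mono[of A2 "Z \<union> A2" "min r r2" r2 e p] p'mb by auto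
      have p': "p' \<in> dc_aut e" using p'mb mb_sub by blast
      define D' where "D' = snd p'"
      have D': "D' \<in> autQ" using dc_autD(2)[OF p'] unfolding D'_def .
      have agC: "\<forall>q\<in>C. D' q = D q" using A2 p'A2 unfolding D'_def by blast
      have "\<forall>q\<in>Bs. inv D' q = inv D q"
      proof
        fix q assume "q \<in> Bs"
        then have "D' (inv D q) = D (inv D q)" using agC unfolding C_def by simp
        then have "D' (inv D q) = q" using autQ_f_inv[OF D] by simp
        then show "inv D' q = inv D q" using autQ_inv_f[OF D', of "inv D q"] by simp
      qed
      then have ag: "\<forall>a\<in>A. e (fst (secM (inv D')) a) (fst (secM (inv D)) a) < \<epsilon>"
        using Bs(3) autQ_inv[OF D'] by simp
      have D'\<epsilon>: "D' \<epsilon> = r" using agC autQ_f_inv[OF D] unfolding C_def \<epsilon>_def by simp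
      have "dc_mult p' (secM (inv D')) \<in> mb e p0 A r"
        unfolding mb_def
      proof (intro CollectI conjI ballI)
        show "dc_mult p' (secM (inv D')) \<in> dc_aut e" using dc_mult_aut[OF p' secM_aut[OF autQ_inv[OF D']]] .
        fix a assume "a \<in> A"
        define z z' where "z = fst (secM (inv D)) a" and "z' = fst (secM (inv D')) a"
        have "e z' z < \<epsilon>" using ag \<open>a \<in> A\<close> unfolding z_def z'_def by blast
        then have "D' (e z' z) < D' \<epsilon>" using autQ_less_iff[OF D'] by simp
        then have 1: "e (fst p' z') (fst p' z) < r" using dc_autD(3)[OF p', of z' z] D'\<epsilon> unfolding D'_def by simp
        have "z \<in> Z" unfolding z_def Z_def using \<open>a \<in> A\<close> by simp
        then have 2: "e (fst p' z) (fst p z) < r" using p'Z unfolding mb_def by auto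
        have 3: "e (fst p z) (fst p0 a) < r" using gp \<open>a \<in> A\<close> unfolding mb_def dc_mult_def z_def D_def by simp
        show "e (fst (dc_mult p' (secM (inv D'))) a) (fst p0 a) < r"
          using ultra_lt3[OF eum 1 2 3] unfolding dc_mult_def z'_def D'_def by simp
      qed
      then show "p' \<in> ?S" using p' topspace_autM[OF eum] unfolding D'_def by simp
    qed
    then show "\<exists>A r'. finite A \<and> 0 < r' \<and> mb e p A r' \<subseteq> ?S"
      using fA2 r2 p0(3) Z_def p0(2) by (intro exI[where x="Z \<union> A2"] exI[where x="min r r2"]) auto
  qed
qed

theorem part2: "projection_splits e (autM_topology e)"
  by (rule projection_splitsI[OF topspace_autM[OF eum] csndM osndM hom_secM csM cfM cgM])

end

theorem theorem4p4:
  fixes d :: "'a \<Rightarrow> 'a \<Rightarrow> rat"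
    and e :: "'b \<Rightarrow> 'b \<Rightarrow> rat"
    and j :: "'a \<Rightarrow> 'b"
  assumes "rational_urysohn_ultrametric d"
    and "is_completion d e j"
  shows "projection_splits d (aut_topology d) \<and> projection_splits e (autM_topology e)"
proof -
  interpret UC d e j
    by (intro UC.intro UU.intro UC_axioms.intro assms)
  show ?thesis using part1 part2 by simp
qed


end
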